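(* Let $L\in\mathcal{N}$ and assume that $L$ is isomorphic to a sublattice of a free lattice. Let $Y$ be an antichain in $L$. If there is an element $d\in L$ such that $a\wedge b=d$ for all distinct $a,b\in Y$, then $|Y|\le 3$ and at most two elements of $Y$ do not cover $d$ in $L$. Moreover, if there is an element $d\in L$ such that $a\vee b=d$ for all distinct $a,b\in Y$, then $|Y|\le 3$ and at most two elements of $Y$ are not covered by $d$ in $L$.
   Context: $\mathcal{N}$ denotes the variety of lattices generated by the pentagon $N_5$ (the five-element non-modular lattice $0<x<y<1$, $0<z<1$, with $z$ incomparable to $x,y$). For $a<b$ in a poset $P$, $b$ covers $a$ if there is no $c\in P$ with $a<c<b$. *)

theory Defs
  imports Main
begin

datatype 'v lterm = Var 'v | Join "'v lterm" "'v lterm" | Meet "'v lterm" "'v lterm"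

fun eval_lt :: "('b \<Rightarrow> 'b \<Rightarrow> 'b) \<Rightarrow> ('b \<Rightarrow> 'b \<Rightarrow> 'b) \<Rightarrow> ('v \<Rightarrow> 'b) \<Rightarrow> 'v lterm \<Rightarrow> 'b" where
  "eval_lt j m v (Var x) = v x"
| "eval_lt j m v (Join s t) = j (eval_lt j m v s) (eval_lt j m v t)"
| "eval_lt j m v (Meet s t) = m (eval_lt j m v s) (eval_lt j m v t)"

text \<open>The pentagon N5: 0 < x < y < 1, 0 < z < 1, z incomparable to x, y.\<close>
datatype n5 = N0 | NX | NY | NZ | N1

fun n5_le :: "n5 \<Rightarrow> n5 \<Rightarrow> bool" where
  "n5_le N0 _ = True"
| "n5_le _ N1 = True"
| "n5_le NX NX = True"
| "n5_le NX NY = True"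
| "n5_le NY NY = True"
| "n5_le NZ NZ = True"
| "n5_le _ _ = False"

definition n5_join :: "n5 \<Rightarrow> n5 \<Rightarrow> n5" where
  "n5_join a b = (if n5_le a b then b else if n5_le b a then a else N1)"

definition n5_meet :: "n5 \<Rightarrow> n5 \<Rightarrow> n5" where
  "n5_meet a b = (if n5_le a b then a else if n5_le b a then b else N0)"

text \<open>L (a lattice type) belongs to the variety \<N> generated by N5:
  L satisfies every lattice identity satisfied by N5.\<close>
definition in_variety_N :: "'a::lattice itself \<Rightarrow> bool" where
  "in_variety_N _ \<longleftrightarrow>
     (\<forall>s t :: nat lterm.
        (\<forall>v :: nat \<Rightarrow> n5. eval_lt n5_join n5_meet v s = eval_lt n5_join n5_meet v t) \<longrightarrow>
        (\<forall>v :: nat \<Rightarrow> 'a. eval_lt sup inf v s = eval_lt sup inf v t))"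

text \<open>The order of the free lattice FL(V): the least quasi-order on lattice terms
  derivable from the lattice laws; the free lattice is the quotient by the
  induced equivalence.\<close>
inductive fl_le :: "'v lterm \<Rightarrow> 'v lterm \<Rightarrow> bool" where
  refl: "fl_le s s"
| trans: "fl_le s t \<Longrightarrow> fl_le t u \<Longrightarrow> fl_le s u"
| join_upper1: "fl_le s (Join s t)"
| join_upper2: "fl_le t (Join s t)"
| join_least: "fl_le s u \<Longrightarrow> fl_le t u \<Longrightarrow> fl_le (Join s t) u"
| meet_lower1: "fl_le (Meet s t) s"
| meet_lower2: "fl_le (Meet s t) t"
| meet_greatest: "fl_le u s \<Longrightarrow> fl_le u t \<Longrightarrow> fl_le u (Meet s t)"

definition fl_eq :: "'v lterm \<Rightarrow> 'v lterm \<Rightarrow> bool" where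
  "fl_eq s t \<longleftrightarrow> fl_le s t \<and> fl_le t s"

definition fl_embedding :: "('a::lattice \<Rightarrow> 'v lterm) \<Rightarrow> bool" where
  "fl_embedding f \<longleftrightarrow>
     (\<forall>a b. fl_eq (f (sup a b)) (Join (f a) (f b))) \<and>
     (\<forall>a b. fl_eq (f (inf a b)) (Meet (f a) (f b))) \<and>
     (\<forall>a b. fl_eq (f a) (f b) \<longrightarrow> a = b)"

definition antichain_in :: "'a::order set \<Rightarrow> bool" where
  "antichain_in Y \<longleftrightarrow> (\<forall>a\<in>Y. \<forall>b\<in>Y. a \<le> b \<longrightarrow> a = b)"

text \<open>covers a b: b covers a.\<close>
definition covers :: "'a::order \<Rightarrow> 'a \<Rightarrow> bool" where
  "covers a b \<longleftrightarrow> a < b \<and> \<not> (\<exists>c. a < c \<and> c < b)"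

end

theory Submission
  imports Defs "HOL-Library.Dual_Ordered_Lattice"
begin

inductive wle :: "'v lterm \<Rightarrow> 'v lterm \<Rightarrow> bool" where
  wvar: "wle (Var x) (Var x)"
| wjoinL: "wle s u \<Longrightarrow> wle t u \<Longrightarrow> wle (Join s t) u"
| wmeetR: "wle u s \<Longrightarrow> wle u t \<Longrightarrow> wle u (Meet s t)"
| wjoinR1: "wle u s \<Longrightarrow> wle u (Join s t)"
| wjoinR2: "wle u t \<Longrightarrow> wle u (Join s t)"
| wmeetL1: "wle s u \<Longrightarrow> wle (Meet s t) u"
| wmeetL2: "wle t u \<Longrightarrow> wle (Meet s t) u"

lemma wle_refl: "wle s s"
  by (induction s) (auto intro: wle.intros)

lemma wle_trans_aux: fixes a b c :: "'v lterm" shows "wle a b \<Longrightarrow> wle b c \<Longrightarrow> wle a c"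
proof (induction "size a + size b + size c" arbitrary: a b c rule: less_induct)
  case less
  have IH: "\<And>a' b' c' :: 'v lterm. size a' + size b' + size c' < size a + size b + size c \<Longrightarrow> wle a' b' \<Longrightarrow> wle b' c' \<Longrightarrow> wle a' c'"
    using less(1) by metis
  have A: "wle a b" and B: "wle b c" by fact+
  from B show ?case
  proof (cases rule: wle.cases)
    case (wvar x) then show ?thesis using A by simp
  next
    case (wmeetR c1 c2)
    have "wle a c1" using IH[of a b c1] A wmeetR by simp
    moreover have "wle a c2" using IH[of a b c2] A wmeetR by simp
    ultimately show ?thesis using wmeetR by (auto intro: wle.intros)
  next
    case (wjoinR1 c1 c2)
    have "wle a c1" using IH[of a b c1] A wjoinR1 by simp
    then show ?thesis using wjoinR1 by (auto intro: wle.intros)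
  next
    case (wjoinR2 c2 c1)
    have "wle a c2" using IH[of a b c2] A wjoinR2 by simp
    then show ?thesis using wjoinR2 by (auto intro: wle.intros)
  next
    case (wjoinL b1 b2)
    from A show ?thesis
    proof (cases rule: wle.cases)
      case (wjoinL a1 a2)
      have "wle a1 c" using IH[of a1 b c] B wjoinL by simp
      moreover have "wle a2 c" using IH[of a2 b c] B wjoinL by simp
      ultimately show ?thesis using wjoinL by (auto intro: wle.intros)
    next
      case (wmeetL1 a1 a2)
      have "wle a1 c" using IH[of a1 b c] B wmeetL1 by simp
      then show ?thesis using wmeetL1 by (auto intro: wle.intros)
    next
      case (wmeetL2 a2 a1)
      have "wle a2 c" using IH[of a2 b c] B wmeetL2 by simp
      then show ?thesis using wmeetL2 by (auto intro: wle.intros)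
    next
      case (wjoinR1 b1' b2')
      then show ?thesis using IH[of a b1 c] \<open>b = Join b1 b2\<close> \<open>wle b1 c\<close> by simp
    next
      case (wjoinR2 b2' b1')
      then show ?thesis using IH[of a b2 c] \<open>b = Join b1 b2\<close> \<open>wle b2 c\<close> by simp
    qed (use wjoinL in auto)
  next
    case (wmeetL1 b1 b2)
    from A show ?thesis
    proof (cases rule: wle.cases)
      case (wjoinL a1 a2)
      have "wle a1 c" using IH[of a1 b c] B wjoinL by simp
      moreover have "wle a2 c" using IH[of a2 b c] B wjoinL by simp
      ultimately show ?thesis using wjoinL by (auto intro: wle.intros)
    next
      case (wmeetL1 a1 a2)
      have "wle a1 c" using IH[of a1 b c] B wmeetL1 by simp
      then show ?thesis using wmeetL1 by (auto intro: wle.intros)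
    next
      case (wmeetL2 a2 a1)
      have "wle a2 c" using IH[of a2 b c] B wmeetL2 by simp
      then show ?thesis using wmeetL2 by (auto intro: wle.intros)
    next
      case (wmeetR b1' b2')
      then show ?thesis using IH[of a b1 c] \<open>b = Meet b1 b2\<close> \<open>wle b1 c\<close> by simp
    qed (use wmeetL1 in auto)
  next
    case (wmeetL2 b2 b1)
    from A show ?thesis
    proof (cases rule: wle.cases)
      case (wjoinL a1 a2)
      have "wle a1 c" using IH[of a1 b c] B wjoinL by simp
      moreover have "wle a2 c" using IH[of a2 b c] B wjoinL by simp
      ultimately show ?thesis using wjoinL by (auto intro: wle.intros)
    next
      case (wmeetL1 a1 a2)
      have "wle a1 c" using IH[of a1 b c] B wmeetL1 by simp
      then show ?thesis using wmeetL1 by (auto intro: wle.intros)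
    next
      case (wmeetL2 a2 a1)
      have "wle a2 c" using IH[of a2 b c] B wmeetL2 by simp
      then show ?thesis using wmeetL2 by (auto intro: wle.intros)
    next
      case (wmeetR b1' b2')
      then show ?thesis using IH[of a b2 c] \<open>b = Meet b1 b2\<close> \<open>wle b2 c\<close> by simp
    qed (use wmeetL2 in auto)
  qed
qed

lemma fl_wle: "fl_le s t \<Longrightarrow> wle s t"
  by (induction rule: fl_le.induct)
     (auto intro: wle.intros wle_refl wle_trans_aux)

lemma wle_fl: "wle s t \<Longrightarrow> fl_le s t"
proof (induction rule: wle.induct)
  case (wjoinR1 u s t) then show ?case by (meson fl_le.join_upper1 fl_le.trans)
next
  case (wjoinR2 u t s) then show ?case by (meson fl_le.join_upper2 fl_le.trans)
next
  case (wmeetL1 s u t) then show ?case by (meson fl_le.meet_lower1 fl_le.trans)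
next
  case (wmeetL2 t u s) then show ?case by (meson fl_le.meet_lower2 fl_le.trans)
qed (auto intro: fl_le.intros)

lemma fl_whitman:
  assumes "fl_le (Meet s t) (Join u v)"
  shows "fl_le s (Join u v) \<or> fl_le t (Join u v) \<or> fl_le (Meet s t) u \<or> fl_le (Meet s t) v"
proof -
  have "wle (Meet s t) (Join u v)" using fl_wle[OF assms] .
  then show ?thesis by (cases rule: wle.cases) (auto intro: wle_fl)
qed


lemma emb_le:
  fixes f :: "'a::lattice \<Rightarrow> 'v lterm"
  assumes "fl_embedding f"
  shows "a \<le> b \<longleftrightarrow> fl_le (f a) (f b)"
proof
  assume "a \<le> b"
  then have "inf a b = a" by (simp add: inf_absorb1)
  then have "fl_eq (f a) (Meet (f a) (f b))" using assms unfolding fl_embedding_def by metis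
  then show "fl_le (f a) (f b)" unfolding fl_eq_def by (meson fl_le.meet_lower2 fl_le.trans)
next
  assume h: "fl_le (f a) (f b)"
  have e: "fl_eq (f (inf a b)) (Meet (f a) (f b))" using assms unfolding fl_embedding_def by blast
  have "fl_eq (f (inf a b)) (f a)"
    using e h unfolding fl_eq_def
    by (meson fl_le.meet_greatest fl_le.meet_lower1 fl_le.refl fl_le.trans)
  then have "inf a b = a" using assms unfolding fl_embedding_def by blast
  then show "a \<le> b" by (metis inf.orderI)
qed

lemma emb_W:
  fixes f :: "'a::lattice \<Rightarrow> 'v lterm" and s t u v :: 'a
  assumes "fl_embedding f" "inf s t \<le> sup u v"
  shows "s \<le> sup u v \<or> t \<le> sup u v \<or> inf s t \<le> u \<or> inf s t \<le> v"
proof -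
  have m: "fl_eq (f (inf s t)) (Meet (f s) (f t))" and j: "fl_eq (f (sup u v)) (Join (f u) (f v))"
    using assms(1) unfolding fl_embedding_def by blast+
  have "fl_le (f (inf s t)) (f (sup u v))" using emb_le[OF assms(1)] assms(2) by blast
  then have "fl_le (Meet (f s) (f t)) (Join (f u) (f v))"
    using m j unfolding fl_eq_def by (meson fl_le.trans)
  then have "fl_le (f s) (Join (f u) (f v)) \<or> fl_le (f t) (Join (f u) (f v)) \<or>
     fl_le (Meet (f s) (f t)) (f u) \<or> fl_le (Meet (f s) (f t)) (f v)" by (rule fl_whitman)
  then show ?thesis
    using m j emb_le[OF assms(1)] unfolding fl_eq_def by (meson fl_le.trans)
qed


lemma n5_join_simps[simp]:
  "n5_join N0 a = a" "n5_join a N0 = a" "n5_join N1 a = N1" "n5_join a N1 = N1" "n5_join a a = a"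
  "n5_join NX NY = NY" "n5_join NY NX = NY" "n5_join NX NZ = N1" "n5_join NZ NX = N1"
  "n5_join NY NZ = N1" "n5_join NZ NY = N1"
  by (cases a; simp add: n5_join_def)+

lemma n5_meet_simps[simp]:
  "n5_meet N0 a = N0" "n5_meet a N0 = N0" "n5_meet N1 a = a" "n5_meet a N1 = a" "n5_meet a a = a"
  "n5_meet NX NY = NX" "n5_meet NY NX = NX" "n5_meet NX NZ = N0" "n5_meet NZ NX = N0"
  "n5_meet NY NZ = N0" "n5_meet NZ NY = N0"
  by (cases a; simp add: n5_meet_def)+

abbreviation ev :: "(nat \<Rightarrow> 'a::lattice) \<Rightarrow> nat lterm \<Rightarrow> 'a" where
  "ev v t \<equiv> eval_lt sup inf v t"

abbreviation evn :: "(nat \<Rightarrow> n5) \<Rightarrow> nat lterm \<Rightarrow> n5" where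
  "evn v t \<equiv> eval_lt n5_join n5_meet v t"

fun subst :: "(nat \<Rightarrow> nat lterm) \<Rightarrow> nat lterm \<Rightarrow> nat lterm" where
  "subst \<sigma> (Var i) = \<sigma> i"
| "subst \<sigma> (Join s t) = Join (subst \<sigma> s) (subst \<sigma> t)"
| "subst \<sigma> (Meet s t) = Meet (subst \<sigma> s) (subst \<sigma> t)"

lemma eval_subst: "eval_lt j m v (subst \<sigma> s) = eval_lt j m (\<lambda>i. eval_lt j m v (\<sigma> i)) s"
  by (induction s) auto

lemma variety_transfer:
  assumes "in_variety_N TYPE('a::lattice)"
    and "\<And>v. evn v s = evn v t"
  shows "ev (w::nat \<Rightarrow> 'a) s = ev w t"
  using assms unfolding in_variety_N_def by blast


definition T3 :: "('b\<Rightarrow>'b\<Rightarrow>'b) \<Rightarrow> ('b\<Rightarrow>'b\<Rightarrow>'b) \<Rightarrow> 'b\<times>'b\<times>'b \<Rightarrow> 'b\<times>'b\<times>'b" where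
  "T3 j m = (\<lambda>(x,y,z). (j x (m y z), j y (m x z), j z (m x y)))"

definition "s6 = T3 Join Meet (T3 Join Meet (Var 0, Var 1, Var 2))"
definition "sA = fst s6"
definition "sB = fst (snd s6)"
definition "sC = snd (snd s6)"

definition \<sigma>6 :: "nat \<Rightarrow> nat lterm" where
  "\<sigma>6 i = (if i = 0 then sA else if i = 1 then sB else if i = 2 then sC
     else if i = 3 then Meet (Join (Var 3) (Meet sA sB)) sA
     else if i = 4 then Meet (Join (Var 4) (Meet sA sB)) sB
     else if i = 5 then Meet (Join (Var 5) (Meet sA sB)) sC else sA)"

definition tv :: "n5 list \<Rightarrow> nat \<Rightarrow> n5" where
  "tv xs i = (if i < 6 then xs ! i else xs ! 0)"

definition valid6 :: "n5 list \<Rightarrow> bool" where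
  "valid6 xs \<longleftrightarrow> length xs = 6 \<and>
     n5_meet (xs!0) (xs!1) = n5_meet (xs!0) (xs!2) \<and> n5_meet (xs!0) (xs!1) = n5_meet (xs!1) (xs!2) \<and>
     n5_le (n5_meet (xs!0) (xs!1)) (xs!3) \<and> n5_le (xs!3) (xs!0) \<and>
     n5_le (n5_meet (xs!0) (xs!1)) (xs!4) \<and> n5_le (xs!4) (xs!1) \<and>
     n5_le (n5_meet (xs!0) (xs!1)) (xs!5) \<and> n5_le (xs!5) (xs!2)"

definition VT :: "n5 list list" where "VT = [[N0,N0,N0,N0,N0,N0], [N0,N0,NX,N0,N0,N0], [N0,N0,NX,N0,N0,NX], [N0,N0,NY,N0,N0,N0], [N0,N0,NY,N0,N0,NX], [N0,N0,NY,N0,N0,NY], [N0,N0,NZ,N0,N0,N0], [N0,N0,NZ,N0,N0,NZ], [N0,N0,N1,N0,N0,N0], [N0,N0,N1,N0,N0,NX], [N0,N0,N1,N0,N0,NY], [N0,N0,N1,N0,N0,NZ], [N0,N0,N1,N0,N0,N1], [N0,NX,N0,N0,N0,N0], [N0,NX,N0,N0,NX,N0], [N0,NX,NZ,N0,N0,N0], [N0,NX,NZ,N0,N0,NZ], [N0,NX,NZ,N0,NX,N0], [N0,NX,NZ,N0,NX,NZ], [N0,NY,N0,N0,N0,N0], [N0,NY,N0,N0,NX,N0], [N0,NY,N0,N0,NY,N0], [N0,NY,NZ,N0,N0,N0], [N0,NY,NZ,N0,N0,NZ], [N0,NY,NZ,N0,NX,N0], [N0,NY,NZ,N0,NX,NZ],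 [N0,NY,NZ,N0,NY,N0], [N0,NY,NZ,N0,NY,NZ], [N0,NZ,N0,N0,N0,N0], [N0,NZ,N0,N0,NZ,N0], [N0,NZ,NX,N0,N0,N0], [N0,NZ,NX,N0,N0,NX], [N0,NZ,NX,N0,NZ,N0], [N0,NZ,NX,N0,NZ,NX], [N0,NZ,NY,N0,N0,N0], [N0,NZ,NY,N0,N0,NX], [N0,NZ,NY,N0,N0,NY], [N0,NZ,NY,N0,NZ,N0], [N0,NZ,NY,N0,NZ,NX], [N0,NZ,NY,N0,NZ,NY], [N0,N1,N0,N0,N0,N0], [N0,N1,N0,N0,NX,N0], [N0,N1,N0,N0,NY,N0], [N0,N1,N0,N0,NZ,N0], [N0,N1,N0,N0,N1,N0], [NX,N0,N0,N0,N0,N0], [NX,N0,N0,NX,N0,N0], [NX,N0,NZ,N0,N0,N0], [NX,N0,NZ,N0,N0,NZ], [NX,N0,NZ,NX,N0,N0], [NX,N0,NZ,NX,N0,NZ], [NX,NX,NX,NX,NX,NX], [NX,NX,NY,NX,NX,NX], [NX,NX,NY,NX,NX,NY], [NX,NX,N1,NX,NX,NX], [NX,NX,N1,NX,NX,NY], [NX,NX,N1,NX,NX,N1], [NX,NY,NX,NX,NX,NX], [NX,NY,NX,NX,NY,NX], [NX,NZ,N0,N0,N0,N0], [NX,NZ,N0,N0,NZ,N0], [NX,NZ,N0,NX,N0,N0], [NX,NZ,N0,NX,NZ,N0], [NX,N1,NX,NX,NX,NX], [NX,N1,NX,NX,NY,NX], [NX,N1,NX,NX,N1,NX], [NY,N0,N0,N0,N0,N0],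 [NY,N0,N0,NX,N0,N0], [NY,N0,N0,NY,N0,N0], [NY,N0,NZ,N0,N0,N0], [NY,N0,NZ,N0,N0,NZ], [NY,N0,NZ,NX,N0,N0], [NY,N0,NZ,NX,N0,NZ], [NY,N0,NZ,NY,N0,N0], [NY,N0,NZ,NY,N0,NZ], [NY,NX,NX,NX,NX,NX], [NY,NX,NX,NY,NX,NX], [NY,NY,NY,NY,NY,NY], [NY,NY,N1,NY,NY,NY], [NY,NY,N1,NY,NY,N1], [NY,NZ,N0,N0,N0,N0], [NY,NZ,N0,N0,NZ,N0], [NY,NZ,N0,NX,N0,N0], [NY,NZ,N0,NX,NZ,N0], [NY,NZ,N0,NY,N0,N0], [NY,NZ,N0,NY,NZ,N0], [NY,N1,NY,NY,NY,NY], [NY,N1,NY,NY,N1,NY], [NZ,N0,N0,N0,N0,N0], [NZ,N0,N0,NZ,N0,N0], [NZ,N0,NX,N0,N0,N0], [NZ,N0,NX,N0,N0,NX], [NZ,N0,NX,NZ,N0,N0], [NZ,N0,NX,NZ,N0,NX], [NZ,N0,NY,N0,N0,N0], [NZ,N0,NY,N0,N0,NX], [NZ,N0,NY,N0,N0,NY], [NZ,N0,NY,NZ,N0,N0], [NZ,N0,NY,NZ,N0,NX], [NZ,N0,NY,NZ,N0,NY], [NZ,NX,N0,N0,N0,N0], [NZ,NX,N0,N0,NX,N0], [NZ,NX,N0,NZ,N0,N0], [NZ,NX,N0,NZ,NX,N0], [NZ,NY,N0,N0,N0,N0], [NZ,NY,N0,N0,NX,N0], [NZ,NY,N0,N0,NY,N0],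 [NZ,NY,N0,NZ,N0,N0], [NZ,NY,N0,NZ,NX,N0], [NZ,NY,N0,NZ,NY,N0], [NZ,NZ,NZ,NZ,NZ,NZ], [NZ,NZ,N1,NZ,NZ,NZ], [NZ,NZ,N1,NZ,NZ,N1], [NZ,N1,NZ,NZ,NZ,NZ], [NZ,N1,NZ,NZ,N1,NZ], [N1,N0,N0,N0,N0,N0], [N1,N0,N0,NX,N0,N0], [N1,N0,N0,NY,N0,N0], [N1,N0,N0,NZ,N0,N0], [N1,N0,N0,N1,N0,N0], [N1,NX,NX,NX,NX,NX], [N1,NX,NX,NY,NX,NX], [N1,NX,NX,N1,NX,NX], [N1,NY,NY,NY,NY,NY], [N1,NY,NY,N1,NY,NY], [N1,NZ,NZ,NZ,NZ,NZ], [N1,NZ,NZ,N1,NZ,NZ], [N1,N1,N1,N1,N1,N1]]"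


definition sem6 :: "nat lterm \<Rightarrow> n5 list" where
  "sem6 s = map (\<lambda>xs. evn (tv xs) s) VT"

lemma map_join2: "map (\<lambda>x. h (f x) (g x)) xs = map2 h (map f xs) (map g xs)"
  by (induction xs) auto

lemma sem6_Join: "sem6 (Join s t) = map2 n5_join (sem6 s) (sem6 t)"
  unfolding sem6_def eval_lt.simps by (rule map_join2)
lemma sem6_Meet: "sem6 (Meet s t) = map2 n5_meet (sem6 s) (sem6 t)"
  unfolding sem6_def eval_lt.simps by (rule map_join2)

lemma sem6_Var0: "sem6 (Var 0) = [N0,N0,N0,N0,N0,N0,N0,N0,N0,N0,N0,N0,N0,N0,N0,N0,N0,N0,N0,N0,N0,N0,N0,N0,N0,N0,N0,N0,N0,N0,N0,N0,N0,N0,N0,N0,N0,N0,N0,N0,N0,N0,N0,N0,N0,NX,NX,NX,NX,NX,NX,NX,NX,NX,NX,NX,NX,NX,NX,NX,NX,NX,NX,NX,NX,NX,NY,NY,NY,NY,NY,NY,NY,NY,NY,NY,NY,NY,NY,NY,NY,NY,NY,NY,NY,NY,NY,NY,NZ,NZ,NZ,NZ,NZ,NZ,NZ,NZ,NZ,NZ,NZ,NZ,NZ,NZ,NZ,NZ,NZ,NZ,NZ,NZ,NZ,NZ,NZ,NZ,NZ,NZ,NZ,N1,N1,N1,N1,N1,N1,N1,N1,N1,N1,N1,N1,N1]" by (simp add: sem6_def VT_def tv_def)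
lemma sem6_Var1: "sem6 (Var 1) = [N0,N0,N0,N0,N0,N0,N0,N0,N0,N0,N0,N0,N0,NX,NX,NX,NX,NX,NX,NY,NY,NY,NY,NY,NY,NY,NY,NY,NZ,NZ,NZ,NZ,NZ,NZ,NZ,NZ,NZ,NZ,NZ,NZ,N1,N1,N1,N1,N1,N0,N0,N0,N0,N0,N0,NX,NX,NX,NX,NX,NX,NY,NY,NZ,NZ,NZ,NZ,N1,N1,N1,N0,N0,N0,N0,N0,N0,N0,N0,N0,NX,NX,NY,NY,NY,NZ,NZ,NZ,NZ,NZ,NZ,N1,N1,N0,N0,N0,N0,N0,N0,N0,N0,N0,N0,N0,N0,NX,NX,NX,NX,NY,NY,NY,NY,NY,NY,NZ,NZ,NZ,N1,N1,N0,N0,N0,N0,N0,NX,NX,NX,NY,NY,NZ,NZ,N1]" by (simp add: sem6_def VT_def tv_def)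
lemma sem6_Var1S: "sem6 (Var (Suc 0)) = [N0,N0,N0,N0,N0,N0,N0,N0,N0,N0,N0,N0,N0,NX,NX,NX,NX,NX,NX,NY,NY,NY,NY,NY,NY,NY,NY,NY,NZ,NZ,NZ,NZ,NZ,NZ,NZ,NZ,NZ,NZ,NZ,NZ,N1,N1,N1,N1,N1,N0,N0,N0,N0,N0,N0,NX,NX,NX,NX,NX,NX,NY,NY,NZ,NZ,NZ,NZ,N1,N1,N1,N0,N0,N0,N0,N0,N0,N0,N0,N0,NX,NX,NY,NY,NY,NZ,NZ,NZ,NZ,NZ,NZ,N1,N1,N0,N0,N0,N0,N0,N0,N0,N0,N0,N0,N0,N0,NX,NX,NX,NX,NY,NY,NY,NY,NY,NY,NZ,NZ,NZ,N1,N1,N0,N0,N0,N0,N0,NX,NX,NX,NY,NY,NZ,NZ,N1]" by (simp add: sem6_def VT_def tv_def)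
lemma sem6_Var2: "sem6 (Var 2) = [N0,NX,NX,NY,NY,NY,NZ,NZ,N1,N1,N1,N1,N1,N0,N0,NZ,NZ,NZ,NZ,N0,N0,N0,NZ,NZ,NZ,NZ,NZ,NZ,N0,N0,NX,NX,NX,NX,NY,NY,NY,NY,NY,NY,N0,N0,N0,N0,N0,N0,N0,NZ,NZ,NZ,NZ,NX,NY,NY,N1,N1,N1,NX,NX,N0,N0,N0,N0,NX,NX,NX,N0,N0,N0,NZ,NZ,NZ,NZ,NZ,NZ,NX,NX,NY,N1,N1,N0,N0,N0,N0,N0,N0,NY,NY,N0,N0,NX,NX,NX,NX,NY,NY,NY,NY,NY,NY,N0,N0,N0,N0,N0,N0,N0,N0,N0,N0,NZ,N1,N1,NZ,NZ,N0,N0,N0,N0,N0,NX,NX,NX,NY,NY,NZ,NZ,N1]" by (simp add: sem6_def VT_def tv_def)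
lemma sem6_Var3: "sem6 (Var 3) = [N0,N0,N0,N0,N0,N0,N0,N0,N0,N0,N0,N0,N0,N0,N0,N0,N0,N0,N0,N0,N0,N0,N0,N0,N0,N0,N0,N0,N0,N0,N0,N0,N0,N0,N0,N0,N0,N0,N0,N0,N0,N0,N0,N0,N0,N0,NX,N0,N0,NX,NX,NX,NX,NX,NX,NX,NX,NX,NX,N0,N0,NX,NX,NX,NX,NX,N0,NX,NY,N0,N0,NX,NX,NY,NY,NX,NY,NY,NY,NY,N0,N0,NX,NX,NY,NY,NY,NY,N0,NZ,N0,N0,NZ,NZ,N0,N0,N0,NZ,NZ,NZ,N0,N0,NZ,NZ,N0,N0,N0,NZ,NZ,NZ,NZ,NZ,NZ,NZ,NZ,N0,NX,NY,NZ,N1,NX,NY,N1,NY,N1,NZ,N1,N1]" by (simp add: sem6_def VT_def tv_def)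
lemma sem6_Var4: "sem6 (Var 4) = [N0,N0,N0,N0,N0,N0,N0,N0,N0,N0,N0,N0,N0,N0,NX,N0,N0,NX,NX,N0,NX,NY,N0,N0,NX,NX,NY,NY,N0,NZ,N0,N0,NZ,NZ,N0,N0,N0,NZ,NZ,NZ,N0,NX,NY,NZ,N1,N0,N0,N0,N0,N0,N0,NX,NX,NX,NX,NX,NX,NX,NY,N0,NZ,N0,NZ,NX,NY,N1,N0,N0,N0,N0,N0,N0,N0,N0,N0,NX,NX,NY,NY,NY,N0,NZ,N0,NZ,N0,NZ,NY,N1,N0,N0,N0,N0,N0,N0,N0,N0,N0,N0,N0,N0,N0,NX,N0,NX,N0,NX,NY,N0,NX,NY,NZ,NZ,NZ,NZ,N1,N0,N0,N0,N0,N0,NX,NX,NX,NY,NY,NZ,NZ,N1]" by (simp add: sem6_def VT_def tv_def)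
lemma sem6_Var5: "sem6 (Var 5) = [N0,N0,NX,N0,NX,NY,N0,NZ,N0,NX,NY,NZ,N1,N0,N0,N0,NZ,N0,NZ,N0,N0,N0,N0,NZ,N0,NZ,N0,NZ,N0,N0,N0,NX,N0,NX,N0,NX,NY,N0,NX,NY,N0,N0,N0,N0,N0,N0,N0,N0,NZ,N0,NZ,NX,NX,NY,NX,NY,N1,NX,NX,N0,N0,N0,N0,NX,NX,NX,N0,N0,N0,N0,NZ,N0,NZ,N0,NZ,NX,NX,NY,NY,N1,N0,N0,N0,N0,N0,N0,NY,NY,N0,N0,N0,NX,N0,NX,N0,NX,NY,N0,NX,NY,N0,N0,N0,N0,N0,N0,N0,N0,N0,N0,NZ,NZ,N1,NZ,NZ,N0,N0,N0,N0,N0,NX,NX,NX,NY,NY,NZ,NZ,N1]" by (simp add: sem6_def VT_def tv_def)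

lemma n5_T3_meets:
  "n5_meet (evn v sA) (evn v sB) = n5_meet (evn v sA) (evn v sC) \<and>
   n5_meet (evn v sA) (evn v sB) = n5_meet (evn v sB) (evn v sC)"
  unfolding sA_def sB_def sC_def s6_def T3_def
  by (cases "v 0"; cases "v 1"; cases "v 2"; simp)

lemma n5_meet_le1: "n5_le (n5_meet x y) x" by (cases x; cases y; simp)
lemma n5_meet_le2: "n5_le (n5_meet x y) y" by (cases x; cases y; simp)
lemma n5_prime: "n5_le D A \<Longrightarrow> n5_le D (n5_meet (n5_join x D) A) \<and> n5_le (n5_meet (n5_join x D) A) A"
  by (cases x; cases D; cases A; simp)

lemma R_valid: "valid6 (map (\<lambda>i. evn v (\<sigma>6 i)) [0..<6])"
proof -
  let ?A = "evn v sA" and ?B = "evn v sB" and ?C = "evn v sC"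
  have M: "n5_meet ?A ?B = n5_meet ?A ?C" "n5_meet ?A ?B = n5_meet ?B ?C" using n5_T3_meets by blast+
  have DA: "n5_le (n5_meet ?A ?B) ?A" by (rule n5_meet_le1)
  have DB: "n5_le (n5_meet ?A ?B) ?B" by (rule n5_meet_le2)
  have DC: "n5_le (n5_meet ?A ?B) ?C" using M(2) n5_meet_le2 by metis
  show ?thesis unfolding valid6_def \<sigma>6_def
    using M n5_prime[OF DA] n5_prime[OF DB] n5_prime[OF DC] by (simp add: upt_rec)
qed

lemma valid_in_VT: "valid6 [a,b,c,a',b',c'] \<Longrightarrow> [a,b,c,a',b',c'] \<in> set VT"
  unfolding valid6_def
  by (cases a; cases b; cases c; (simp)?; cases a'; (simp)?; cases b'; (simp)?; cases c'; simp add: VT_def)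


locale six =
  fixes a b c a1 b1 c1 :: "'a::lattice"
  assumes var: "in_variety_N TYPE('a)"
    and h1: "inf a b = inf a c" and h2: "inf a b = inf b c"
    and h3: "inf a b \<le> a1" "a1 \<le> a" "inf a b \<le> b1" "b1 \<le> b" "inf a b \<le> c1" "c1 \<le> c"
begin

definition vL :: "nat \<Rightarrow> 'a" where
  "vL i = (if i = 0 then a else if i = 1 then b else if i = 2 then c else if i = 3 then a1
     else if i = 4 then b1 else if i = 5 then c1 else a)"

lemma T3_fix: "sup a (inf b c) = a" "sup b (inf a c) = b" "sup c (inf a b) = c"
  using h1 h2 by (metis inf_le1 inf_le2 sup.absorb1 inf_commute)+

lemma evA: "ev vL sA = a" and evB: "ev vL sB = b" and evC: "ev vL sC = c"
  unfolding sA_def sB_def sC_def s6_def T3_def by (simp_all add: vL_def T3_fix)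

lemma vL_fix: "ev vL (\<sigma>6 i) = vL i"
proof -
  have p: "inf (sup x (inf a b)) y = x" if "inf a b \<le> x" "x \<le> y" for x y
    using that by (simp add: sup.absorb1 inf.absorb1)
  show ?thesis unfolding \<sigma>6_def
    by (simp add: evA evB evC vL_def p h3)
qed

lemma transfer: assumes "sem6 s = sem6 t" shows "ev vL s = ev vL t"
proof -
  have N5: "evn v (subst \<sigma>6 s) = evn v (subst \<sigma>6 t)" for v
  proof -
    let ?r = "map (\<lambda>i. evn v (\<sigma>6 i)) [0..<6]"
    have "valid6 ?r" by (rule R_valid)
    then have "?r \<in> set VT" using valid_in_VT by (simp add: upt_rec)
    moreover have "\<forall>xs\<in>set VT. evn (tv xs) s = evn (tv xs) t"
      using assms unfolding sem6_def by (simp add: map_eq_conv)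
    ultimately have e: "evn (tv ?r) s = evn (tv ?r) t" by blast
    have "tv ?r = (\<lambda>i. evn v (\<sigma>6 i))"
      by (rule ext) (simp add: tv_def \<sigma>6_def nth_Cons' upt_rec)
    then show ?thesis using e by (simp add: eval_subst)
  qed
  have "ev vL (subst \<sigma>6 s) = ev vL (subst \<sigma>6 t)"
    by (rule variety_transfer[OF var]) (rule N5)
  then show ?thesis by (simp add: eval_subst vL_fix)
qed

lemma base_le: assumes "sem6 (Meet s t) = sem6 s" shows "ev vL s \<le> ev vL t"
proof -
  have "ev vL (Meet s t) = ev vL s" by (rule transfer[OF assms])
  then show ?thesis by (metis inf.orderI eval_lt.simps(3))
qed

end

fun app :: "(bool \<times> nat lterm) list \<Rightarrow> nat lterm \<Rightarrow> nat lterm" where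
  "app [] s = s"
| "app ((b,g)#cs) s = app cs (if b then Join s g else Meet s g)"

lemma app_mono: "ev v lo \<le> ev v hi \<Longrightarrow> ev v (app cs lo) \<le> ev v (app cs hi)"
proof (induction cs arbitrary: lo hi)
  case (Cons x cs)
  obtain b g where x: "x = (b,g)" by fastforce
  have "ev v (if b then Join lo g else Meet lo g) \<le> ev v (if b then Join hi g else Meet hi g)"
    using Cons.prems by (auto intro: le_supI1 le_infI1)
  then show ?case using Cons.IH x by simp
qed simp

definition "g0 = Var 0"
definition "g1 = Var 1"
definition "g2 = Var 2"
definition "g3 = Var 3"
definition "g4 = Var 4"
definition "g5 = Var 5"
definition "g6 = Join g0 g1"
definition "g7 = Meet g0 g1"
definition "g8 = Join g0 g2"
definition "g11 = Join g1 g2"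
definition "g9 = Join g0 g4"
definition "g10 = Join g0 g5"
definition "g12 = Join g1 g3"
definition "g13 = Join g1 g5"
definition "g14 = Join g2 g3"
definition "g15 = Join g2 g4"
definition "g16 = Join g3 g4"
definition "g17 = Join g3 g5"
definition "g18 = Join g4 g5"
definition "g30 = Meet g9 g1"
definition "g33 = Meet g10 g2"
definition "g41 = Join g16 g5"
definition "g26 = Meet g8 g12"
definition "g27 = Meet g8 g13"
definition "g23 = Meet g6 g17"
definition "g24 = Meet g6 g18"
definition "g28 = Meet g8 g16"
definition "g29 = Meet g8 g18"
definition "g32 = Meet g9 g12"
definition "g34 = Meet g10 g14"
definition "g36 = Meet g11 g16"
definition "g37 = Meet g11 g17"
definition "g39 = Meet g13 g15"
lemma sem_g0: "sem6 g0 = [N0,N0,N0,N0,N0,N0,N0,N0,N0,N0,N0,N0,N0,N0,N0,N0,N0,N0,N0,N0,N0,N0,N0,N0,N0,N0,N0,N0,N0,N0,N0,N0,N0,N0,N0,N0,N0,N0,N0,N0,N0,N0,N0,N0,N0,NX,NX,NX,NX,NX,NX,NX,NX,NX,NX,NX,NX,NX,NX,NX,NX,NX,NX,NX,NX,NX,NY,NY,NY,NY,NY,NY,NY,NY,NY,NY,NY,NY,NY,NY,NY,NY,NY,NY,NY,NY,NY,NY,NZ,NZ,NZ,NZ,NZ,NZ,NZ,NZ,NZ,NZ,NZ,NZ,NZ,NZ,NZ,NZ,NZ,NZ,NZ,NZ,NZ,NZ,NZ,NZ,NZ,NZ,NZ,N1,N1,N1,N1,N1,N1,N1,N1,N1,N1,N1,N1,N1]"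 unfolding g0_def by (rule sem6_Var0)
lemma sem_g1: "sem6 g1 = [N0,N0,N0,N0,N0,N0,N0,N0,N0,N0,N0,N0,N0,NX,NX,NX,NX,NX,NX,NY,NY,NY,NY,NY,NY,NY,NY,NY,NZ,NZ,NZ,NZ,NZ,NZ,NZ,NZ,NZ,NZ,NZ,NZ,N1,N1,N1,N1,N1,N0,N0,N0,N0,N0,N0,NX,NX,NX,NX,NX,NX,NY,NY,NZ,NZ,NZ,NZ,N1,N1,N1,N0,N0,N0,N0,N0,N0,N0,N0,N0,NX,NX,NY,NY,NY,NZ,NZ,NZ,NZ,NZ,NZ,N1,N1,N0,N0,N0,N0,N0,N0,N0,N0,N0,N0,N0,N0,NX,NX,NX,NX,NY,NY,NY,NY,NY,NY,NZ,NZ,NZ,N1,N1,N0,N0,N0,N0,N0,NX,NX,NX,NY,NY,NZ,NZ,N1]" unfolding g1_def by (rule sem6_Var1)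
lemma sem_g2: "sem6 g2 = [N0,NX,NX,NY,NY,NY,NZ,NZ,N1,N1,N1,N1,N1,N0,N0,NZ,NZ,NZ,NZ,N0,N0,N0,NZ,NZ,NZ,NZ,NZ,NZ,N0,N0,NX,NX,NX,NX,NY,NY,NY,NY,NY,NY,N0,N0,N0,N0,N0,N0,N0,NZ,NZ,NZ,NZ,NX,NY,NY,N1,N1,N1,NX,NX,N0,N0,N0,N0,NX,NX,NX,N0,N0,N0,NZ,NZ,NZ,NZ,NZ,NZ,NX,NX,NY,N1,N1,N0,N0,N0,N0,N0,N0,NY,NY,N0,N0,NX,NX,NX,NX,NY,NY,NY,NY,NY,NY,N0,N0,N0,N0,N0,N0,N0,N0,N0,N0,NZ,N1,N1,NZ,NZ,N0,N0,N0,N0,N0,NX,NX,NX,NY,NY,NZ,NZ,N1]" unfolding g2_def by (rule sem6_Var2)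
lemma sem_g3: "sem6 g3 = [N0,N0,N0,N0,N0,N0,N0,N0,N0,N0,N0,N0,N0,N0,N0,N0,N0,N0,N0,N0,N0,N0,N0,N0,N0,N0,N0,N0,N0,N0,N0,N0,N0,N0,N0,N0,N0,N0,N0,N0,N0,N0,N0,N0,N0,N0,NX,N0,N0,NX,NX,NX,NX,NX,NX,NX,NX,NX,NX,N0,N0,NX,NX,NX,NX,NX,N0,NX,NY,N0,N0,NX,NX,NY,NY,NX,NY,NY,NY,NY,N0,N0,NX,NX,NY,NY,NY,NY,N0,NZ,N0,N0,NZ,NZ,N0,N0,N0,NZ,NZ,NZ,N0,N0,NZ,NZ,N0,N0,N0,NZ,NZ,NZ,NZ,NZ,NZ,NZ,NZ,N0,NX,NY,NZ,N1,NX,NY,N1,NY,N1,NZ,N1,N1]" unfolding g3_def by (rule sem6_Var3)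
lemma sem_g4: "sem6 g4 = [N0,N0,N0,N0,N0,N0,N0,N0,N0,N0,N0,N0,N0,N0,NX,N0,N0,NX,NX,N0,NX,NY,N0,N0,NX,NX,NY,NY,N0,NZ,N0,N0,NZ,NZ,N0,N0,N0,NZ,NZ,NZ,N0,NX,NY,NZ,N1,N0,N0,N0,N0,N0,N0,NX,NX,NX,NX,NX,NX,NX,NY,N0,NZ,N0,NZ,NX,NY,N1,N0,N0,N0,N0,N0,N0,N0,N0,N0,NX,NX,NY,NY,NY,N0,NZ,N0,NZ,N0,NZ,NY,N1,N0,N0,N0,N0,N0,N0,N0,N0,N0,N0,N0,N0,N0,NX,N0,NX,N0,NX,NY,N0,NX,NY,NZ,NZ,NZ,NZ,N1,N0,N0,N0,N0,N0,NX,NX,NX,NY,NY,NZ,NZ,N1]" unfolding g4_def by (rule sem6_Var4)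
lemma sem_g5: "sem6 g5 = [N0,N0,NX,N0,NX,NY,N0,NZ,N0,NX,NY,NZ,N1,N0,N0,N0,NZ,N0,NZ,N0,N0,N0,N0,NZ,N0,NZ,N0,NZ,N0,N0,N0,NX,N0,NX,N0,NX,NY,N0,NX,NY,N0,N0,N0,N0,N0,N0,N0,N0,NZ,N0,NZ,NX,NX,NY,NX,NY,N1,NX,NX,N0,N0,N0,N0,NX,NX,NX,N0,N0,N0,N0,NZ,N0,NZ,N0,NZ,NX,NX,NY,NY,N1,N0,N0,N0,N0,N0,N0,NY,NY,N0,N0,N0,NX,N0,NX,N0,NX,NY,N0,NX,NY,N0,N0,N0,N0,N0,N0,N0,N0,N0,N0,NZ,NZ,N1,NZ,NZ,N0,N0,N0,N0,N0,NX,NX,NX,NY,NY,NZ,NZ,N1]" unfolding g5_def by (rule sem6_Var5)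
lemma sem_g6: "sem6 g6 = [N0,N0,N0,N0,N0,N0,N0,N0,N0,N0,N0,N0,N0,NX,NX,NX,NX,NX,NX,NY,NY,NY,NY,NY,NY,NY,NY,NY,NZ,NZ,NZ,NZ,NZ,NZ,NZ,NZ,NZ,NZ,NZ,NZ,N1,N1,N1,N1,N1,NX,NX,NX,NX,NX,NX,NX,NX,NX,NX,NX,NX,NY,NY,N1,N1,N1,N1,N1,N1,N1,NY,NY,NY,NY,NY,NY,NY,NY,NY,NY,NY,NY,NY,NY,N1,N1,N1,N1,N1,N1,N1,N1,NZ,NZ,NZ,NZ,NZ,NZ,NZ,NZ,NZ,NZ,NZ,NZ,N1,N1,N1,N1,N1,N1,N1,N1,N1,N1,NZ,NZ,NZ,N1,N1,N1,N1,N1,N1,N1,N1,N1,N1,N1,N1,N1,N1,N1]" by (simp add: g6_def sem6_Join sem6_Meet sem_g0 sem_g1)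
lemma sem_g7: "sem6 g7 = [N0,N0,N0,N0,N0,N0,N0,N0,N0,N0,N0,N0,N0,N0,N0,N0,N0,N0,N0,N0,N0,N0,N0,N0,N0,N0,N0,N0,N0,N0,N0,N0,N0,N0,N0,N0,N0,N0,N0,N0,N0,N0,N0,N0,N0,N0,N0,N0,N0,N0,N0,NX,NX,NX,NX,NX,NX,NX,NX,N0,N0,N0,N0,NX,NX,NX,N0,N0,N0,N0,N0,N0,N0,N0,N0,NX,NX,NY,NY,NY,N0,N0,N0,N0,N0,N0,NY,NY,N0,N0,N0,N0,N0,N0,N0,N0,N0,N0,N0,N0,N0,N0,N0,N0,N0,N0,N0,N0,N0,N0,NZ,NZ,NZ,NZ,NZ,N0,N0,N0,N0,N0,NX,NX,NX,NY,NY,NZ,NZ,N1]" by (simp add: g7_def sem6_Join sem6_Meet sem_g0 sem_g1)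
lemma sem_g8: "sem6 g8 = [N0,NX,NX,NY,NY,NY,NZ,NZ,N1,N1,N1,N1,N1,N0,N0,NZ,NZ,NZ,NZ,N0,N0,N0,NZ,NZ,NZ,NZ,NZ,NZ,N0,N0,NX,NX,NX,NX,NY,NY,NY,NY,NY,NY,N0,N0,N0,N0,N0,NX,NX,N1,N1,N1,N1,NX,NY,NY,N1,N1,N1,NX,NX,NX,NX,NX,NX,NX,NX,NX,NY,NY,NY,N1,N1,N1,N1,N1,N1,NY,NY,NY,N1,N1,NY,NY,NY,NY,NY,NY,NY,NY,NZ,NZ,N1,N1,N1,N1,N1,N1,N1,N1,N1,N1,NZ,NZ,NZ,NZ,NZ,NZ,NZ,NZ,NZ,NZ,NZ,N1,N1,NZ,NZ,N1,N1,N1,N1,N1,N1,N1,N1,N1,N1,N1,N1,N1]" by (simp add: g8_def sem6_Join sem6_Meet sem_g0 sem_g2)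
lemma sem_g11: "sem6 g11 = [N0,NX,NX,NY,NY,NY,NZ,NZ,N1,N1,N1,N1,N1,NX,NX,N1,N1,N1,N1,NY,NY,NY,N1,N1,N1,N1,N1,N1,NZ,NZ,N1,N1,N1,N1,N1,N1,N1,N1,N1,N1,N1,N1,N1,N1,N1,N0,N0,NZ,NZ,NZ,NZ,NX,NY,NY,N1,N1,N1,NY,NY,NZ,NZ,NZ,NZ,N1,N1,N1,N0,N0,N0,NZ,NZ,NZ,NZ,NZ,NZ,NX,NX,NY,N1,N1,NZ,NZ,NZ,NZ,NZ,NZ,N1,N1,N0,N0,NX,NX,NX,NX,NY,NY,NY,NY,NY,NY,NX,NX,NX,NX,NY,NY,NY,NY,NY,NY,NZ,N1,N1,N1,N1,N0,N0,N0,N0,N0,NX,NX,NX,NY,NY,NZ,NZ,N1]" by (simp add: g11_def sem6_Join sem6_Meet sem_g1 sem_g2)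
lemma sem_g9: "sem6 g9 = [N0,N0,N0,N0,N0,N0,N0,N0,N0,N0,N0,N0,N0,N0,NX,N0,N0,NX,NX,N0,NX,NY,N0,N0,NX,NX,NY,NY,N0,NZ,N0,N0,NZ,NZ,N0,N0,N0,NZ,NZ,NZ,N0,NX,NY,NZ,N1,NX,NX,NX,NX,NX,NX,NX,NX,NX,NX,NX,NX,NX,NY,NX,N1,NX,N1,NX,NY,N1,NY,NY,NY,NY,NY,NY,NY,NY,NY,NY,NY,NY,NY,NY,NY,N1,NY,N1,NY,N1,NY,N1,NZ,NZ,NZ,NZ,NZ,NZ,NZ,NZ,NZ,NZ,NZ,NZ,NZ,N1,NZ,N1,NZ,N1,N1,NZ,N1,N1,NZ,NZ,NZ,NZ,N1,N1,N1,N1,N1,N1,N1,N1,N1,N1,N1,N1,N1,N1]" by (simp add: g9_def sem6_Join sem6_Meet sem_g0 sem_g4)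
lemma sem_g10: "sem6 g10 = [N0,N0,NX,N0,NX,NY,N0,NZ,N0,NX,NY,NZ,N1,N0,N0,N0,NZ,N0,NZ,N0,N0,N0,N0,NZ,N0,NZ,N0,NZ,N0,N0,N0,NX,N0,NX,N0,NX,NY,N0,NX,NY,N0,N0,N0,N0,N0,NX,NX,NX,N1,NX,N1,NX,NX,NY,NX,NY,N1,NX,NX,NX,NX,NX,NX,NX,NX,NX,NY,NY,NY,NY,N1,NY,N1,NY,N1,NY,NY,NY,NY,N1,NY,NY,NY,NY,NY,NY,NY,NY,NZ,NZ,NZ,N1,NZ,N1,NZ,N1,N1,NZ,N1,N1,NZ,NZ,NZ,NZ,NZ,NZ,NZ,NZ,NZ,NZ,NZ,NZ,N1,NZ,NZ,N1,N1,N1,N1,N1,N1,N1,N1,N1,N1,N1,N1,N1]" by (simp add: g10_def sem6_Join sem6_Meet sem_g0 sem_g5)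
lemma sem_g12: "sem6 g12 = [N0,N0,N0,N0,N0,N0,N0,N0,N0,N0,N0,N0,N0,NX,NX,NX,NX,NX,NX,NY,NY,NY,NY,NY,NY,NY,NY,NY,NZ,NZ,NZ,NZ,NZ,NZ,NZ,NZ,NZ,NZ,NZ,NZ,N1,N1,N1,N1,N1,N0,NX,N0,N0,NX,NX,NX,NX,NX,NX,NX,NX,NY,NY,NZ,NZ,N1,N1,N1,N1,N1,N0,NX,NY,N0,N0,NX,NX,NY,NY,NX,NY,NY,NY,NY,NZ,NZ,N1,N1,N1,N1,N1,N1,N0,NZ,N0,N0,NZ,NZ,N0,N0,N0,NZ,NZ,NZ,NX,NX,N1,N1,NY,NY,NY,N1,N1,N1,NZ,NZ,NZ,N1,N1,N0,NX,NY,NZ,N1,NX,NY,N1,NY,N1,NZ,N1,N1]" by (simp add: g12_def sem6_Join sem6_Meet sem_g1 sem_g3)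
lemma sem_g13: "sem6 g13 = [N0,N0,NX,N0,NX,NY,N0,NZ,N0,NX,NY,NZ,N1,NX,NX,NX,N1,NX,N1,NY,NY,NY,NY,N1,NY,N1,NY,N1,NZ,NZ,NZ,N1,NZ,N1,NZ,N1,N1,NZ,N1,N1,N1,N1,N1,N1,N1,N0,N0,N0,NZ,N0,NZ,NX,NX,NY,NX,NY,N1,NY,NY,NZ,NZ,NZ,NZ,N1,N1,N1,N0,N0,N0,N0,NZ,N0,NZ,N0,NZ,NX,NX,NY,NY,N1,NZ,NZ,NZ,NZ,NZ,NZ,N1,N1,N0,N0,N0,NX,N0,NX,N0,NX,NY,N0,NX,NY,NX,NX,NX,NX,NY,NY,NY,NY,NY,NY,NZ,NZ,N1,N1,N1,N0,N0,N0,N0,N0,NX,NX,NX,NY,NY,NZ,NZ,N1]" by (simp add: g13_def sem6_Join sem6_Meet sem_g1 sem_g5)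
lemma sem_g14: "sem6 g14 = [N0,NX,NX,NY,NY,NY,NZ,NZ,N1,N1,N1,N1,N1,N0,N0,NZ,NZ,NZ,NZ,N0,N0,N0,NZ,NZ,NZ,NZ,NZ,NZ,N0,N0,NX,NX,NX,NX,NY,NY,NY,NY,NY,NY,N0,N0,N0,N0,N0,N0,NX,NZ,NZ,N1,N1,NX,NY,NY,N1,N1,N1,NX,NX,N0,N0,NX,NX,NX,NX,NX,N0,NX,NY,NZ,NZ,N1,N1,N1,N1,NX,NY,NY,N1,N1,N0,N0,NX,NX,NY,NY,NY,NY,N0,NZ,NX,NX,N1,N1,NY,NY,NY,N1,N1,N1,N0,N0,NZ,NZ,N0,N0,N0,NZ,NZ,NZ,NZ,N1,N1,NZ,NZ,N0,NX,NY,NZ,N1,NX,NY,N1,NY,N1,NZ,N1,N1]" by (simp add: g14_def sem6_Join sem6_Meet sem_g2 sem_g3)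
lemma sem_g15: "sem6 g15 = [N0,NX,NX,NY,NY,NY,NZ,NZ,N1,N1,N1,N1,N1,N0,NX,NZ,NZ,N1,N1,N0,NX,NY,NZ,NZ,N1,N1,N1,N1,N0,NZ,NX,NX,N1,N1,NY,NY,NY,N1,N1,N1,N0,NX,NY,NZ,N1,N0,N0,NZ,NZ,NZ,NZ,NX,NY,NY,N1,N1,N1,NX,NY,N0,NZ,N0,NZ,NX,NY,N1,N0,N0,N0,NZ,NZ,NZ,NZ,NZ,NZ,NX,NX,NY,N1,N1,N0,NZ,N0,NZ,N0,NZ,NY,N1,N0,N0,NX,NX,NX,NX,NY,NY,NY,NY,NY,NY,N0,NX,N0,NX,N0,NX,NY,N0,NX,NY,NZ,N1,N1,NZ,N1,N0,N0,N0,N0,N0,NX,NX,NX,NY,NY,NZ,NZ,N1]" by (simp add: g15_def sem6_Join sem6_Meet sem_g2 sem_g4)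
lemma sem_g16: "sem6 g16 = [N0,N0,N0,N0,N0,N0,N0,N0,N0,N0,N0,N0,N0,N0,NX,N0,N0,NX,NX,N0,NX,NY,N0,N0,NX,NX,NY,NY,N0,NZ,N0,N0,NZ,NZ,N0,N0,N0,NZ,NZ,NZ,N0,NX,NY,NZ,N1,N0,NX,N0,N0,NX,NX,NX,NX,NX,NX,NX,NX,NX,NY,N0,NZ,NX,N1,NX,NY,N1,N0,NX,NY,N0,N0,NX,NX,NY,NY,NX,NY,NY,NY,NY,N0,NZ,NX,N1,NY,N1,NY,N1,N0,NZ,N0,N0,NZ,NZ,N0,N0,N0,NZ,NZ,NZ,N0,NX,NZ,N1,N0,NX,NY,NZ,N1,N1,NZ,NZ,NZ,NZ,N1,N0,NX,NY,NZ,N1,NX,NY,N1,NY,N1,NZ,N1,N1]" by (simp add: g16_def sem6_Join sem6_Meet sem_g3 sem_g4)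
lemma sem_g17: "sem6 g17 = [N0,N0,NX,N0,NX,NY,N0,NZ,N0,NX,NY,NZ,N1,N0,N0,N0,NZ,N0,NZ,N0,N0,N0,N0,NZ,N0,NZ,N0,NZ,N0,N0,N0,NX,N0,NX,N0,NX,NY,N0,NX,NY,N0,N0,N0,N0,N0,N0,NX,N0,NZ,NX,N1,NX,NX,NY,NX,NY,N1,NX,NX,N0,N0,NX,NX,NX,NX,NX,N0,NX,NY,N0,NZ,NX,N1,NY,N1,NX,NY,NY,NY,N1,N0,N0,NX,NX,NY,NY,NY,NY,N0,NZ,N0,NX,NZ,N1,N0,NX,NY,NZ,N1,N1,N0,N0,NZ,NZ,N0,N0,N0,NZ,NZ,NZ,NZ,NZ,N1,NZ,NZ,N0,NX,NY,NZ,N1,NX,NY,N1,NY,N1,NZ,N1,N1]" by (simp add: g17_def sem6_Join sem6_Meet sem_g3 sem_g5)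
lemma sem_g18: "sem6 g18 = [N0,N0,NX,N0,NX,NY,N0,NZ,N0,NX,NY,NZ,N1,N0,NX,N0,NZ,NX,N1,N0,NX,NY,N0,NZ,NX,N1,NY,N1,N0,NZ,N0,NX,NZ,N1,N0,NX,NY,NZ,N1,N1,N0,NX,NY,NZ,N1,N0,N0,N0,NZ,N0,NZ,NX,NX,NY,NX,NY,N1,NX,NY,N0,NZ,N0,NZ,NX,NY,N1,N0,N0,N0,N0,NZ,N0,NZ,N0,NZ,NX,NX,NY,NY,N1,N0,NZ,N0,NZ,N0,NZ,NY,N1,N0,N0,N0,NX,N0,NX,N0,NX,NY,N0,NX,NY,N0,NX,N0,NX,N0,NX,NY,N0,NX,NY,NZ,NZ,N1,NZ,N1,N0,N0,N0,N0,N0,NX,NX,NX,NY,NY,NZ,NZ,N1]" by (simp add: g18_def sem6_Join sem6_Meet sem_g4 sem_g5)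
lemma sem_g30: "sem6 g30 = [N0,N0,N0,N0,N0,N0,N0,N0,N0,N0,N0,N0,N0,N0,NX,N0,N0,NX,NX,N0,NX,NY,N0,N0,NX,NX,NY,NY,N0,NZ,N0,N0,NZ,NZ,N0,N0,N0,NZ,NZ,NZ,N0,NX,NY,NZ,N1,N0,N0,N0,N0,N0,N0,NX,NX,NX,NX,NX,NX,NX,NY,N0,NZ,N0,NZ,NX,NY,N1,N0,N0,N0,N0,N0,N0,N0,N0,N0,NX,NX,NY,NY,NY,N0,NZ,N0,NZ,N0,NZ,NY,N1,N0,N0,N0,N0,N0,N0,N0,N0,N0,N0,N0,N0,N0,NX,N0,NX,N0,NY,NY,N0,NY,NY,NZ,NZ,NZ,NZ,N1,N0,N0,N0,N0,N0,NX,NX,NX,NY,NY,NZ,NZ,N1]" by (simp add: g30_def sem6_Join sem6_Meet sem_g9 sem_g1)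
lemma sem_g33: "sem6 g33 = [N0,N0,NX,N0,NX,NY,N0,NZ,N0,NX,NY,NZ,N1,N0,N0,N0,NZ,N0,NZ,N0,N0,N0,N0,NZ,N0,NZ,N0,NZ,N0,N0,N0,NX,N0,NX,N0,NX,NY,N0,NX,NY,N0,N0,N0,N0,N0,N0,N0,N0,NZ,N0,NZ,NX,NX,NY,NX,NY,N1,NX,NX,N0,N0,N0,N0,NX,NX,NX,N0,N0,N0,N0,NZ,N0,NZ,N0,NZ,NX,NX,NY,NY,N1,N0,N0,N0,N0,N0,N0,NY,NY,N0,N0,N0,NX,N0,NX,N0,NY,NY,N0,NY,NY,N0,N0,N0,N0,N0,N0,N0,N0,N0,N0,NZ,NZ,N1,NZ,NZ,N0,N0,N0,N0,N0,NX,NX,NX,NY,NY,NZ,NZ,N1]" by (simp add: g33_def sem6_Join sem6_Meet sem_g10 sem_g2)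
lemma sem_g41: "sem6 g41 = [N0,N0,NX,N0,NX,NY,N0,NZ,N0,NX,NY,NZ,N1,N0,NX,N0,NZ,NX,N1,N0,NX,NY,N0,NZ,NX,N1,NY,N1,N0,NZ,N0,NX,NZ,N1,N0,NX,NY,NZ,N1,N1,N0,NX,NY,NZ,N1,N0,NX,N0,NZ,NX,N1,NX,NX,NY,NX,NY,N1,NX,NY,N0,NZ,NX,N1,NX,NY,N1,N0,NX,NY,N0,NZ,NX,N1,NY,N1,NX,NY,NY,NY,N1,N0,NZ,NX,N1,NY,N1,NY,N1,N0,NZ,N0,NX,NZ,N1,N0,NX,NY,NZ,N1,N1,N0,NX,NZ,N1,N0,NX,NY,NZ,N1,N1,NZ,NZ,N1,NZ,N1,N0,NX,NY,NZ,N1,NX,NY,N1,NY,N1,NZ,N1,N1]" by (simp add: g41_def sem6_Join sem6_Meet sem_g16 sem_g5)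
lemma sem_g26: "sem6 g26 = [N0,N0,N0,N0,N0,N0,N0,N0,N0,N0,N0,N0,N0,N0,N0,N0,N0,N0,N0,N0,N0,N0,N0,N0,N0,N0,N0,N0,N0,N0,N0,N0,N0,N0,N0,N0,N0,N0,N0,N0,N0,N0,N0,N0,N0,N0,NX,N0,N0,NX,NX,NX,NX,NX,NX,NX,NX,NX,NX,N0,N0,NX,NX,NX,NX,NX,N0,NX,NY,N0,N0,NX,NX,NY,NY,NX,NY,NY,NY,NY,N0,N0,NY,NY,NY,NY,NY,NY,N0,NZ,N0,N0,NZ,NZ,N0,N0,N0,NZ,NZ,NZ,N0,N0,NZ,NZ,N0,N0,N0,NZ,NZ,NZ,NZ,NZ,NZ,NZ,NZ,N0,NX,NY,NZ,N1,NX,NY,N1,NY,N1,NZ,N1,N1]" by (simp add: g26_def sem6_Join sem6_Meet sem_g8 sem_g12)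
lemma sem_g27: "sem6 g27 = [N0,N0,NX,N0,NX,NY,N0,NZ,N0,NX,NY,NZ,N1,N0,N0,N0,NZ,N0,NZ,N0,N0,N0,N0,NZ,N0,NZ,N0,NZ,N0,N0,N0,NX,N0,NX,N0,NY,NY,N0,NY,NY,N0,N0,N0,N0,N0,N0,N0,N0,NZ,N0,NZ,NX,NX,NY,NX,NY,N1,NX,NX,N0,N0,N0,N0,NX,NX,NX,N0,N0,N0,N0,NZ,N0,NZ,N0,NZ,NX,NX,NY,NY,N1,N0,N0,N0,N0,N0,N0,NY,NY,N0,N0,N0,NX,N0,NX,N0,NX,NY,N0,NX,NY,N0,N0,N0,N0,N0,N0,N0,N0,N0,N0,NZ,NZ,N1,NZ,NZ,N0,N0,N0,N0,N0,NX,NX,NX,NY,NY,NZ,NZ,N1]" by (simp add: g27_def sem6_Join sem6_Meet sem_g8 sem_g13)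
lemma sem_g23: "sem6 g23 = [N0,N0,N0,N0,N0,N0,N0,N0,N0,N0,N0,N0,N0,N0,N0,N0,N0,N0,N0,N0,N0,N0,N0,N0,N0,N0,N0,N0,N0,N0,N0,N0,N0,N0,N0,N0,N0,N0,N0,N0,N0,N0,N0,N0,N0,N0,NX,N0,N0,NX,NX,NX,NX,NX,NX,NX,NX,NX,NX,N0,N0,NX,NX,NX,NX,NX,N0,NX,NY,N0,N0,NX,NY,NY,NY,NX,NY,NY,NY,NY,N0,N0,NX,NX,NY,NY,NY,NY,N0,NZ,N0,N0,NZ,NZ,N0,N0,N0,NZ,NZ,NZ,N0,N0,NZ,NZ,N0,N0,N0,NZ,NZ,NZ,NZ,NZ,NZ,NZ,NZ,N0,NX,NY,NZ,N1,NX,NY,N1,NY,N1,NZ,N1,N1]" by (simp add: g23_def sem6_Join sem6_Meet sem_g6 sem_g17)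
lemma sem_g24: "sem6 g24 = [N0,N0,N0,N0,N0,N0,N0,N0,N0,N0,N0,N0,N0,N0,NX,N0,N0,NX,NX,N0,NX,NY,N0,N0,NX,NY,NY,NY,N0,NZ,N0,N0,NZ,NZ,N0,N0,N0,NZ,NZ,NZ,N0,NX,NY,NZ,N1,N0,N0,N0,N0,N0,N0,NX,NX,NX,NX,NX,NX,NX,NY,N0,NZ,N0,NZ,NX,NY,N1,N0,N0,N0,N0,N0,N0,N0,N0,N0,NX,NX,NY,NY,NY,N0,NZ,N0,NZ,N0,NZ,NY,N1,N0,N0,N0,N0,N0,N0,N0,N0,N0,N0,N0,N0,N0,NX,N0,NX,N0,NX,NY,N0,NX,NY,NZ,NZ,NZ,NZ,N1,N0,N0,N0,N0,N0,NX,NX,NX,NY,NY,NZ,NZ,N1]" by (simp add: g24_def sem6_Join sem6_Meet sem_g6 sem_g18)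
lemma sem_g28: "sem6 g28 = [N0,N0,N0,N0,N0,N0,N0,N0,N0,N0,N0,N0,N0,N0,N0,N0,N0,N0,N0,N0,N0,N0,N0,N0,N0,N0,N0,N0,N0,N0,N0,N0,N0,N0,N0,N0,N0,N0,N0,N0,N0,N0,N0,N0,N0,N0,NX,N0,N0,NX,NX,NX,NX,NX,NX,NX,NX,NX,NX,N0,N0,NX,NX,NX,NX,NX,N0,NX,NY,N0,N0,NX,NX,NY,NY,NX,NY,NY,NY,NY,N0,N0,NX,NY,NY,NY,NY,NY,N0,NZ,N0,N0,NZ,NZ,N0,N0,N0,NZ,NZ,NZ,N0,N0,NZ,NZ,N0,N0,N0,NZ,NZ,NZ,NZ,NZ,NZ,NZ,NZ,N0,NX,NY,NZ,N1,NX,NY,N1,NY,N1,NZ,N1,N1]" by (simp add: g28_def sem6_Join sem6_Meet sem_g8 sem_g16)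
lemma sem_g29: "sem6 g29 = [N0,N0,NX,N0,NX,NY,N0,NZ,N0,NX,NY,NZ,N1,N0,N0,N0,NZ,N0,NZ,N0,N0,N0,N0,NZ,N0,NZ,N0,NZ,N0,N0,N0,NX,N0,NX,N0,NX,NY,N0,NY,NY,N0,N0,N0,N0,N0,N0,N0,N0,NZ,N0,NZ,NX,NX,NY,NX,NY,N1,NX,NX,N0,N0,N0,N0,NX,NX,NX,N0,N0,N0,N0,NZ,N0,NZ,N0,NZ,NX,NX,NY,NY,N1,N0,N0,N0,N0,N0,N0,NY,NY,N0,N0,N0,NX,N0,NX,N0,NX,NY,N0,NX,NY,N0,N0,N0,N0,N0,N0,N0,N0,N0,N0,NZ,NZ,N1,NZ,NZ,N0,N0,N0,N0,N0,NX,NX,NX,NY,NY,NZ,NZ,N1]" by (simp add: g29_def sem6_Join sem6_Meet sem_g8 sem_g18)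
lemma sem_g32: "sem6 g32 = [N0,N0,N0,N0,N0,N0,N0,N0,N0,N0,N0,N0,N0,N0,NX,N0,N0,NX,NX,N0,NX,NY,N0,N0,NX,NX,NY,NY,N0,NZ,N0,N0,NZ,NZ,N0,N0,N0,NZ,NZ,NZ,N0,NX,NY,NZ,N1,N0,NX,N0,N0,NX,NX,NX,NX,NX,NX,NX,NX,NX,NY,N0,NZ,NX,N1,NX,NY,N1,N0,NX,NY,N0,N0,NX,NX,NY,NY,NX,NY,NY,NY,NY,N0,NZ,NY,N1,NY,N1,NY,N1,N0,NZ,N0,N0,NZ,NZ,N0,N0,N0,NZ,NZ,NZ,N0,NX,NZ,N1,N0,NY,NY,NZ,N1,N1,NZ,NZ,NZ,NZ,N1,N0,NX,NY,NZ,N1,NX,NY,N1,NY,N1,NZ,N1,N1]" by (simp add: g32_def sem6_Join sem6_Meet sem_g9 sem_g12)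
lemma sem_g34: "sem6 g34 = [N0,N0,NX,N0,NX,NY,N0,NZ,N0,NX,NY,NZ,N1,N0,N0,N0,NZ,N0,NZ,N0,N0,N0,N0,NZ,N0,NZ,N0,NZ,N0,N0,N0,NX,N0,NX,N0,NX,NY,N0,NX,NY,N0,N0,N0,N0,N0,N0,NX,N0,NZ,NX,N1,NX,NX,NY,NX,NY,N1,NX,NX,N0,N0,NX,NX,NX,NX,NX,N0,NX,NY,N0,NZ,NY,N1,NY,N1,NX,NY,NY,NY,N1,N0,N0,NX,NX,NY,NY,NY,NY,N0,NZ,N0,NX,NZ,N1,N0,NY,NY,NZ,N1,N1,N0,N0,NZ,NZ,N0,N0,N0,NZ,NZ,NZ,NZ,NZ,N1,NZ,NZ,N0,NX,NY,NZ,N1,NX,NY,N1,NY,N1,NZ,N1,N1]" by (simp add: g34_def sem6_Join sem6_Meet sem_g10 sem_g14)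
lemma sem_g36: "sem6 g36 = [N0,N0,N0,N0,N0,N0,N0,N0,N0,N0,N0,N0,N0,N0,NX,N0,N0,NX,NX,N0,NX,NY,N0,N0,NX,NX,NY,NY,N0,NZ,N0,N0,NZ,NZ,N0,N0,N0,NZ,NZ,NZ,N0,NX,NY,NZ,N1,N0,N0,N0,N0,N0,N0,NX,NX,NX,NX,NX,NX,NX,NY,N0,NZ,N0,NZ,NX,NY,N1,N0,N0,N0,N0,N0,N0,N0,N0,N0,NX,NX,NY,NY,NY,N0,NZ,N0,NZ,N0,NZ,NY,N1,N0,N0,N0,N0,N0,N0,N0,N0,N0,N0,N0,N0,N0,NX,N0,NX,N0,NX,NY,N0,NY,NY,NZ,NZ,NZ,NZ,N1,N0,N0,N0,N0,N0,NX,NX,NX,NY,NY,NZ,NZ,N1]" by (simp add: g36_def sem6_Join sem6_Meet sem_g11 sem_g16)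
lemma sem_g37: "sem6 g37 = [N0,N0,NX,N0,NX,NY,N0,NZ,N0,NX,NY,NZ,N1,N0,N0,N0,NZ,N0,NZ,N0,N0,N0,N0,NZ,N0,NZ,N0,NZ,N0,N0,N0,NX,N0,NX,N0,NX,NY,N0,NX,NY,N0,N0,N0,N0,N0,N0,N0,N0,NZ,N0,NZ,NX,NX,NY,NX,NY,N1,NX,NX,N0,N0,N0,N0,NX,NX,NX,N0,N0,N0,N0,NZ,N0,NZ,N0,NZ,NX,NX,NY,NY,N1,N0,N0,N0,N0,N0,N0,NY,NY,N0,N0,N0,NX,N0,NX,N0,NX,NY,N0,NY,NY,N0,N0,N0,N0,N0,N0,N0,N0,N0,N0,NZ,NZ,N1,NZ,NZ,N0,N0,N0,N0,N0,NX,NX,NX,NY,NY,NZ,NZ,N1]" by (simp add: g37_def sem6_Join sem6_Meet sem_g11 sem_g17)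
lemma sem_g39: "sem6 g39 = [N0,N0,NX,N0,NX,NY,N0,NZ,N0,NX,NY,NZ,N1,N0,NX,N0,NZ,NX,N1,N0,NX,NY,N0,NZ,NY,N1,NY,N1,N0,NZ,N0,NX,NZ,N1,N0,NY,NY,NZ,N1,N1,N0,NX,NY,NZ,N1,N0,N0,N0,NZ,N0,NZ,NX,NX,NY,NX,NY,N1,NX,NY,N0,NZ,N0,NZ,NX,NY,N1,N0,N0,N0,N0,NZ,N0,NZ,N0,NZ,NX,NX,NY,NY,N1,N0,NZ,N0,NZ,N0,NZ,NY,N1,N0,N0,N0,NX,N0,NX,N0,NX,NY,N0,NX,NY,N0,NX,N0,NX,N0,NX,NY,N0,NX,NY,NZ,NZ,N1,NZ,N1,N0,N0,N0,N0,N0,NX,NX,NX,NY,NY,NZ,NZ,N1]" by (simp add: g39_def sem6_Join sem6_Meet sem_g13 sem_g15)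
lemmas sems = sem6_Join sem6_Meet sem_g0 sem_g1 sem_g2 sem_g3 sem_g4 sem_g5 sem_g6 sem_g7 sem_g8 sem_g11 sem_g9 sem_g10 sem_g12 sem_g13 sem_g14 sem_g15 sem_g16 sem_g17 sem_g18 sem_g30 sem_g33 sem_g41 sem_g26 sem_g27 sem_g23 sem_g24 sem_g28 sem_g29 sem_g32 sem_g34 sem_g36 sem_g37 sem_g39

locale six_w = six +
  assumes W: "\<And>s t u v :: 'a. inf s t \<le> sup u v \<Longrightarrow> s \<le> sup u v \<or> t \<le> sup u v \<or> inf s t \<le> u \<or> inf s t \<le> v"
    and sa: "\<not> a \<le> a1" and sb: "\<not> b \<le> b1" and sc: "\<not> c \<le> c1"
    and sa1: "\<not> a1 \<le> inf a b" and sb1: "\<not> b1 \<le> inf a b" and sc1: "\<not> c1 \<le> inf a b"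
    and nab: "\<not> a \<le> b" and nba: "\<not> b \<le> a" and nac: "\<not> a \<le> c" and nca: "\<not> c \<le> a"
    and nbc: "\<not> b \<le> c" and ncb: "\<not> c \<le> b"
begin

lemma W_ev: "ev vL (Meet s t) \<le> ev vL (Join u v) \<Longrightarrow>
  ev vL s \<le> ev vL (Join u v) \<or> ev vL t \<le> ev vL (Join u v) \<or> ev vL (Meet s t) \<le> ev vL u \<or> ev vL (Meet s t) \<le> ev vL v"
  using W[of "ev vL s" "ev vL t" "ev vL u" "ev vL v"] by simp

lemma strict_0_3: "ev vL g0 \<le> ev vL g3 \<Longrightarrow> False"
  using sa sb sc sa1 sb1 sc1 nab nba nac nca nbc ncb by (simp add: g0_def g1_def g2_def g3_def g4_def g5_def g6_def g7_def g8_def g9_def g10_def g11_def g12_def g13_def g14_def g15_def g16_def g17_def g18_def g23_def g24_def g26_def g27_def g28_def g29_def g30_def g32_def g33_def g34_def g36_def g37_def g39_def g41_def vL_def)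
lemma strict_2_5: "ev vL g2 \<le> ev vL g5 \<Longrightarrow> False"
  using sa sb sc sa1 sb1 sc1 nab nba nac nca nbc ncb by (simp add: g0_def g1_def g2_def g3_def g4_def g5_def g6_def g7_def g8_def g9_def g10_def g11_def g12_def g13_def g14_def g15_def g16_def g17_def g18_def g23_def g24_def g26_def g27_def g28_def g29_def g30_def g32_def g33_def g34_def g36_def g37_def g39_def g41_def vL_def)
lemma strict_1_4: "ev vL g1 \<le> ev vL g4 \<Longrightarrow> False"
  using sa sb sc sa1 sb1 sc1 nab nba nac nca nbc ncb by (simp add: g0_def g1_def g2_def g3_def g4_def g5_def g6_def g7_def g8_def g9_def g10_def g11_def g12_def g13_def g14_def g15_def g16_def g17_def g18_def g23_def g24_def g26_def g27_def g28_def g29_def g30_def g32_def g33_def g34_def g36_def g37_def g39_def g41_def vL_def)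
lemma strict_5_7: "ev vL g5 \<le> ev vL g7 \<Longrightarrow> False"
  using sa sb sc sa1 sb1 sc1 nab nba nac nca nbc ncb by (simp add: g0_def g1_def g2_def g3_def g4_def g5_def g6_def g7_def g8_def g9_def g10_def g11_def g12_def g13_def g14_def g15_def g16_def g17_def g18_def g23_def g24_def g26_def g27_def g28_def g29_def g30_def g32_def g33_def g34_def g36_def g37_def g39_def g41_def vL_def)
lemma strict_4_7: "ev vL g4 \<le> ev vL g7 \<Longrightarrow> False"
  using sa sb sc sa1 sb1 sc1 nab nba nac nca nbc ncb by (simp add: g0_def g1_def g2_def g3_def g4_def g5_def g6_def g7_def g8_def g9_def g10_def g11_def g12_def g13_def g14_def g15_def g16_def g17_def g18_def g23_def g24_def g26_def g27_def g28_def g29_def g30_def g32_def g33_def g34_def g36_def g37_def g39_def g41_def vL_def)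
lemma strict_3_7: "ev vL g3 \<le> ev vL g7 \<Longrightarrow> False"
  using sa sb sc sa1 sb1 sc1 nab nba nac nca nbc ncb by (simp add: g0_def g1_def g2_def g3_def g4_def g5_def g6_def g7_def g8_def g9_def g10_def g11_def g12_def g13_def g14_def g15_def g16_def g17_def g18_def g23_def g24_def g26_def g27_def g28_def g29_def g30_def g32_def g33_def g34_def g36_def g37_def g39_def g41_def vL_def)
lemma covers_contra: "False"
proof -
  have "ev vL (Meet g6 g41) \<le> ev vL (Join g23 g24)" by (rule base_le) (simp add: sems)
  from W_ev[OF this] show False
  proof (elim disjE)
    assume H1: "ev vL (g6) \<le> ev vL (Join g23 g24)"
    have "ev vL (Meet g8 g41) \<le> ev vL (Join g28 g29)" by (rule base_le) (simp add: sems)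
    from W_ev[OF this] show False
    proof (elim disjE)
      assume H2: "ev vL (g8) \<le> ev vL (Join g28 g29)"
      have "ev vL (Meet g11 g41) \<le> ev vL (Join g36 g37)" by (rule base_le) (simp add: sems)
      from W_ev[OF this] show False
      proof (elim disjE)
        assume H3: "ev vL (g11) \<le> ev vL (Join g36 g37)"
        have "ev vL (Meet g0 g12) \<le> ev vL (Join g3 g4)"
        proof -
          have "ev vL (Meet g0 g12) \<le> ev vL (app [(False, g26)] (g6))" by (rule base_le) (simp add: sems)
          also have "\<dots> \<le> ev vL (app [(False, g26)] (Join g23 g24))" by (rule app_mono[OF H1])
          also have "\<dots> \<le> ev vL (Join g3 g4)" by (rule base_le) (simp add: sems)
          finally show ?thesis .
        qed
        from W_ev[OF this] show False
        proof (elim disjE)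
          assume H4: "ev vL (g0) \<le> ev vL (Join g3 g4)"
          have "ev vL (Meet g2 g10) \<le> ev vL (Join g3 g5)"
          proof -
            have "ev vL (Meet g2 g10) \<le> ev vL (app [(False, g33)] (g8))" by (rule base_le) (simp add: sems)
            also have "\<dots> \<le> ev vL (app [(False, g33)] (Join g28 g29))" by (rule app_mono[OF H2])
            also have "\<dots> \<le> ev vL (Join g3 g5)" by (rule base_le) (simp add: sems)
            finally show ?thesis .
          qed
          from W_ev[OF this] show False
          proof (elim disjE)
            assume H5: "ev vL (g2) \<le> ev vL (Join g3 g5)"
            have "ev vL (Meet g10 g11) \<le> ev vL (Join g3 g5)"
            proof -
              have "ev vL (Meet g10 g11) \<le> ev vL (app [(False, g33)] (g8))" by (rule base_le) (simp add: sems)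
              also have "\<dots> \<le> ev vL (app [(False, g33)] (Join g28 g29))" by (rule app_mono[OF H2])
              also have "\<dots> \<le> ev vL (Join g3 g5)" by (rule base_le) (simp add: sems)
              finally show ?thesis .
            qed
            from W_ev[OF this] show False
            proof (elim disjE)
              assume H6: "ev vL (g10) \<le> ev vL (Join g3 g5)"
              have "ev vL (g0) \<le> ev vL (g3)"
              proof -
                have "ev vL (g0) \<le> ev vL (app [(False, g0)] (g0))" by (rule base_le) (simp add: sems)
                also have "\<dots> \<le> ev vL (app [(False, g0)] (Join g3 g4))" by (rule app_mono[OF H4])
                also have "\<dots> \<le> ev vL (app [(False, g12)] (g10))" by (rule base_le) (simp add: sems)
                also have "\<dots> \<le> ev vL (app [(False, g12)] (Join g3 g5))" by (rule app_mono[OF H6])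
                also have "\<dots> \<le> ev vL (g3)" by (rule base_le) (simp add: sems)
                finally show ?thesis .
              qed
              then show False by (rule strict_0_3)
            next
              assume H7: "ev vL (g11) \<le> ev vL (Join g3 g5)"
              have "ev vL (g0) \<le> ev vL (g3)"
              proof -
                have "ev vL (g0) \<le> ev vL (app [] (g0))" by (rule base_le) (simp add: sems)
                also have "\<dots> \<le> ev vL (app [] (Join g3 g4))" by (rule app_mono[OF H4])
                also have "\<dots> \<le> ev vL (app [(False, g1), (True, g3)] (g11))" by (rule base_le) (simp add: sems)
                also have "\<dots> \<le> ev vL (app [(False, g1), (True, g3)] (Join g3 g5))" by (rule app_mono[OF H7])
                also have "\<dots> \<le> ev vL (g3)" by (rule base_le) (simp add: sems)
                finally show ?thesis .
              qed
              then show False by (rule strict_0_3)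
            next
              assume H8: "ev vL (Meet g10 g11) \<le> ev vL (g3)"
              have "ev vL (g2) \<le> ev vL (g5)"
              proof -
                have "ev vL (g2) \<le> ev vL (app [(False, g2)] (g2))" by (rule base_le) (simp add: sems)
                also have "\<dots> \<le> ev vL (app [(False, g2)] (Join g3 g5))" by (rule app_mono[OF H5])
                also have "\<dots> \<le> ev vL (app [(False, g2)] (Meet g10 g11))" by (rule base_le) (simp add: sems)
                also have "\<dots> \<le> ev vL (app [(False, g2)] (g3))" by (rule app_mono[OF H8])
                also have "\<dots> \<le> ev vL (g5)" by (rule base_le) (simp add: sems)
                finally show ?thesis .
              qed
              then show False by (rule strict_2_5)
            next
              assume H9: "ev vL (Meet g10 g11) \<le> ev vL (g5)"
              have "ev vL (g2) \<le> ev vL (g5)"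
              proof -
                have "ev vL (g2) \<le> ev vL (app [(False, g2)] (g2))" by (rule base_le) (simp add: sems)
                also have "\<dots> \<le> ev vL (app [(False, g2)] (Join g3 g5))" by (rule app_mono[OF H5])
                also have "\<dots> \<le> ev vL (app [] (Meet g10 g11))" by (rule base_le) (simp add: sems)
                also have "\<dots> \<le> ev vL (app [] (g5))" by (rule app_mono[OF H9])
                also have "\<dots> \<le> ev vL (g5)" by (rule base_le) (simp add: sems)
                finally show ?thesis .
              qed
              then show False by (rule strict_2_5)
            qed
          next
            assume H10: "ev vL (g10) \<le> ev vL (Join g3 g5)"
            have "ev vL (g0) \<le> ev vL (g3)"
            proof -
              have "ev vL (g0) \<le> ev vL (app [(False, g0)] (g0))" by (rule base_le) (simp add: sems)
              also have "\<dots> \<le> ev vL (app [(False, g0)] (Join g3 g4))" by (rule app_mono[OF H4])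
              also have "\<dots> \<le> ev vL (app [(False, g12)] (g10))" by (rule base_le) (simp add: sems)
              also have "\<dots> \<le> ev vL (app [(False, g12)] (Join g3 g5))" by (rule app_mono[OF H10])
              also have "\<dots> \<le> ev vL (g3)" by (rule base_le) (simp add: sems)
              finally show ?thesis .
            qed
            then show False by (rule strict_0_3)
          next
            assume H11: "ev vL (Meet g2 g10) \<le> ev vL (g3)"
            have "ev vL (g2) \<le> ev vL (g5)"
            proof -
              have "ev vL (g2) \<le> ev vL (app [(False, g2)] (g8))" by (rule base_le) (simp add: sems)
              also have "\<dots> \<le> ev vL (app [(False, g2)] (Join g28 g29))" by (rule app_mono[OF H2])
              also have "\<dots> \<le> ev vL (app [(True, g1), (False, g2)] (Meet g2 g10))" by (rule base_le) (simp add: sems)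
              also have "\<dots> \<le> ev vL (app [(True, g1), (False, g2)] (g3))" by (rule app_mono[OF H11])
              also have "\<dots> \<le> ev vL (g5)" by (rule base_le) (simp add: sems)
              finally show ?thesis .
            qed
            then show False by (rule strict_2_5)
          next
            assume H12: "ev vL (Meet g2 g10) \<le> ev vL (g5)"
            have "ev vL (Meet g10 g14) \<le> ev vL (Join g3 g5)"
            proof -
              have "ev vL (Meet g10 g14) \<le> ev vL (app [(False, g34)] (g8))" by (rule base_le) (simp add: sems)
              also have "\<dots> \<le> ev vL (app [(False, g34)] (Join g28 g29))" by (rule app_mono[OF H2])
              also have "\<dots> \<le> ev vL (Join g3 g5)" by (rule base_le) (simp add: sems)
              finally show ?thesis .
            qed
            from W_ev[OF this] show False
            proof (elim disjE)
              assume H13: "ev vL (g10) \<le> ev vL (Join g3 g5)"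
              have "ev vL (g0) \<le> ev vL (g3)"
              proof -
                have "ev vL (g0) \<le> ev vL (app [(False, g0)] (g0))" by (rule base_le) (simp add: sems)
                also have "\<dots> \<le> ev vL (app [(False, g0)] (Join g3 g4))" by (rule app_mono[OF H4])
                also have "\<dots> \<le> ev vL (app [(False, g12)] (g10))" by (rule base_le) (simp add: sems)
                also have "\<dots> \<le> ev vL (app [(False, g12)] (Join g3 g5))" by (rule app_mono[OF H13])
                also have "\<dots> \<le> ev vL (g3)" by (rule base_le) (simp add: sems)
                finally show ?thesis .
              qed
              then show False by (rule strict_0_3)
            next
              assume H14: "ev vL (g14) \<le> ev vL (Join g3 g5)"
              have "ev vL (g2) \<le> ev vL (g5)"
              proof -
                have "ev vL (g2) \<le> ev vL (app [(False, g2)] (g14))" by (rule base_le) (simp add: sems)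
                also have "\<dots> \<le> ev vL (app [(False, g2)] (Join g3 g5))" by (rule app_mono[OF H14])
                also have "\<dots> \<le> ev vL (app [] (Meet g2 g10))" by (rule base_le) (simp add: sems)
                also have "\<dots> \<le> ev vL (app [] (g5))" by (rule app_mono[OF H12])
                also have "\<dots> \<le> ev vL (g5)" by (rule base_le) (simp add: sems)
                finally show ?thesis .
              qed
              then show False by (rule strict_2_5)
            next
              assume H15: "ev vL (Meet g10 g14) \<le> ev vL (g3)"
              have "ev vL (g2) \<le> ev vL (g5)"
              proof -
                have "ev vL (g2) \<le> ev vL (app [(False, g2)] (g8))" by (rule base_le) (simp add: sems)
                also have "\<dots> \<le> ev vL (app [(False, g2)] (Join g28 g29))" by (rule app_mono[OF H2])
                also have "\<dots> \<le> ev vL (app [(True, g1), (False, g2)] (Meet g10 g14))" by (rule base_le) (simp add: sems)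
                also have "\<dots> \<le> ev vL (app [(True, g1), (False, g2)] (g3))" by (rule app_mono[OF H15])
                also have "\<dots> \<le> ev vL (g5)" by (rule base_le) (simp add: sems)
                finally show ?thesis .
              qed
              then show False by (rule strict_2_5)
            next
              assume H16: "ev vL (Meet g10 g14) \<le> ev vL (g5)"
              have "ev vL (g0) \<le> ev vL (g3)"
              proof -
                have "ev vL (g0) \<le> ev vL (app [(False, g0)] (g6))" by (rule base_le) (simp add: sems)
                also have "\<dots> \<le> ev vL (app [(False, g0)] (Join g23 g24))" by (rule app_mono[OF H1])
                also have "\<dots> \<le> ev vL (app [(True, g1), (False, g0)] (Meet g10 g14))" by (rule base_le) (simp add: sems)
                also have "\<dots> \<le> ev vL (app [(True, g1), (False, g0)] (g5))" by (rule app_mono[OF H16])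
                also have "\<dots> \<le> ev vL (g3)" by (rule base_le) (simp add: sems)
                finally show ?thesis .
              qed
              then show False by (rule strict_0_3)
            qed
          qed
        next
          assume H17: "ev vL (g12) \<le> ev vL (Join g3 g4)"
          have "ev vL (Meet g2 g10) \<le> ev vL (Join g3 g5)"
          proof -
            have "ev vL (Meet g2 g10) \<le> ev vL (app [(False, g33)] (g8))" by (rule base_le) (simp add: sems)
            also have "\<dots> \<le> ev vL (app [(False, g33)] (Join g28 g29))" by (rule app_mono[OF H2])
            also have "\<dots> \<le> ev vL (Join g3 g5)" by (rule base_le) (simp add: sems)
            finally show ?thesis .
          qed
          from W_ev[OF this] show False
          proof (elim disjE)
            assume H18: "ev vL (g2) \<le> ev vL (Join g3 g5)"
            have "ev vL (Meet g13 g15) \<le> ev vL (Join g4 g5)"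
            proof -
              have "ev vL (Meet g13 g15) \<le> ev vL (app [(False, g39)] (g11))" by (rule base_le) (simp add: sems)
              also have "\<dots> \<le> ev vL (app [(False, g39)] (Join g36 g37))" by (rule app_mono[OF H3])
              also have "\<dots> \<le> ev vL (Join g4 g5)" by (rule base_le) (simp add: sems)
              finally show ?thesis .
            qed
            from W_ev[OF this] show False
            proof (elim disjE)
              assume H19: "ev vL (g13) \<le> ev vL (Join g4 g5)"
              have "ev vL (g1) \<le> ev vL (g4)"
              proof -
                have "ev vL (g1) \<le> ev vL (app [(False, g1)] (g12))" by (rule base_le) (simp add: sems)
                also have "\<dots> \<le> ev vL (app [(False, g1)] (Join g3 g4))" by (rule app_mono[OF H17])
                also have "\<dots> \<le> ev vL (app [(False, g9)] (g13))" by (rule base_le) (simp add: sems)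
                also have "\<dots> \<le> ev vL (app [(False, g9)] (Join g4 g5))" by (rule app_mono[OF H19])
                also have "\<dots> \<le> ev vL (g4)" by (rule base_le) (simp add: sems)
                finally show ?thesis .
              qed
              then show False by (rule strict_1_4)
            next
              assume H20: "ev vL (g15) \<le> ev vL (Join g4 g5)"
              have "ev vL (g2) \<le> ev vL (g5)"
              proof -
                have "ev vL (g2) \<le> ev vL (app [(False, g2)] (g2))" by (rule base_le) (simp add: sems)
                also have "\<dots> \<le> ev vL (app [(False, g2)] (Join g3 g5))" by (rule app_mono[OF H18])
                also have "\<dots> \<le> ev vL (app [(False, g10)] (g15))" by (rule base_le) (simp add: sems)
                also have "\<dots> \<le> ev vL (app [(False, g10)] (Join g4 g5))" by (rule app_mono[OF H20])
                also have "\<dots> \<le> ev vL (g5)" by (rule base_le) (simp add: sems)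
                finally show ?thesis .
              qed
              then show False by (rule strict_2_5)
            next
              assume H21: "ev vL (Meet g13 g15) \<le> ev vL (g4)"
              have "ev vL (g2) \<le> ev vL (g5)"
              proof -
                have "ev vL (g2) \<le> ev vL (app [(False, g2)] (g8))" by (rule base_le) (simp add: sems)
                also have "\<dots> \<le> ev vL (app [(False, g2)] (Join g28 g29))" by (rule app_mono[OF H2])
                also have "\<dots> \<le> ev vL (app [(True, g0), (False, g2)] (Meet g13 g15))" by (rule base_le) (simp add: sems)
                also have "\<dots> \<le> ev vL (app [(True, g0), (False, g2)] (g4))" by (rule app_mono[OF H21])
                also have "\<dots> \<le> ev vL (g5)" by (rule base_le) (simp add: sems)
                finally show ?thesis .
              qed
              then show False by (rule strict_2_5)
            next
              assume H22: "ev vL (Meet g13 g15) \<le> ev vL (g5)"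
              have "ev vL (g1) \<le> ev vL (g4)"
              proof -
                have "ev vL (g1) \<le> ev vL (app [(False, g1)] (g6))" by (rule base_le) (simp add: sems)
                also have "\<dots> \<le> ev vL (app [(False, g1)] (Join g23 g24))" by (rule app_mono[OF H1])
                also have "\<dots> \<le> ev vL (app [(True, g0), (False, g1)] (Meet g13 g15))" by (rule base_le) (simp add: sems)
                also have "\<dots> \<le> ev vL (app [(True, g0), (False, g1)] (g5))" by (rule app_mono[OF H22])
                also have "\<dots> \<le> ev vL (g4)" by (rule base_le) (simp add: sems)
                finally show ?thesis .
              qed
              then show False by (rule strict_1_4)
            qed
          next
            assume H23: "ev vL (g10) \<le> ev vL (Join g3 g5)"
            have "ev vL (Meet g9 g11) \<le> ev vL (Join g3 g4)"
            proof -
              have "ev vL (Meet g9 g11) \<le> ev vL (app [(False, g30)] (g6))" by (rule base_le) (simp add: sems)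
              also have "\<dots> \<le> ev vL (app [(False, g30)] (Join g23 g24))" by (rule app_mono[OF H1])
              also have "\<dots> \<le> ev vL (Join g3 g4)" by (rule base_le) (simp add: sems)
              finally show ?thesis .
            qed
            from W_ev[OF this] show False
            proof (elim disjE)
              assume H24: "ev vL (g9) \<le> ev vL (Join g3 g4)"
              have "ev vL (g0) \<le> ev vL (g3)"
              proof -
                have "ev vL (g0) \<le> ev vL (app [(False, g0)] (g10))" by (rule base_le) (simp add: sems)
                also have "\<dots> \<le> ev vL (app [(False, g0)] (Join g3 g5))" by (rule app_mono[OF H23])
                also have "\<dots> \<le> ev vL (app [(False, g14)] (g9))" by (rule base_le) (simp add: sems)
                also have "\<dots> \<le> ev vL (app [(False, g14)] (Join g3 g4))" by (rule app_mono[OF H24])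
                also have "\<dots> \<le> ev vL (g3)" by (rule base_le) (simp add: sems)
                finally show ?thesis .
              qed
              then show False by (rule strict_0_3)
            next
              assume H25: "ev vL (g11) \<le> ev vL (Join g3 g4)"
              have "ev vL (g0) \<le> ev vL (g3)"
              proof -
                have "ev vL (g0) \<le> ev vL (app [] (g10))" by (rule base_le) (simp add: sems)
                also have "\<dots> \<le> ev vL (app [] (Join g3 g5))" by (rule app_mono[OF H23])
                also have "\<dots> \<le> ev vL (app [(False, g2), (True, g3)] (g11))" by (rule base_le) (simp add: sems)
                also have "\<dots> \<le> ev vL (app [(False, g2), (True, g3)] (Join g3 g4))" by (rule app_mono[OF H25])
                also have "\<dots> \<le> ev vL (g3)" by (rule base_le) (simp add: sems)
                finally show ?thesis .
              qed
              then show False by (rule strict_0_3)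
            next
              assume H26: "ev vL (Meet g9 g11) \<le> ev vL (g3)"
              have "ev vL (g1) \<le> ev vL (g4)"
              proof -
                have "ev vL (g1) \<le> ev vL (app [(False, g1)] (g12))" by (rule base_le) (simp add: sems)
                also have "\<dots> \<le> ev vL (app [(False, g1)] (Join g3 g4))" by (rule app_mono[OF H17])
                also have "\<dots> \<le> ev vL (app [(False, g1)] (Meet g9 g11))" by (rule base_le) (simp add: sems)
                also have "\<dots> \<le> ev vL (app [(False, g1)] (g3))" by (rule app_mono[OF H26])
                also have "\<dots> \<le> ev vL (g4)" by (rule base_le) (simp add: sems)
                finally show ?thesis .
              qed
              then show False by (rule strict_1_4)
            next
              assume H27: "ev vL (Meet g9 g11) \<le> ev vL (g4)"
              have "ev vL (g1) \<le> ev vL (g4)"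
              proof -
                have "ev vL (g1) \<le> ev vL (app [(False, g1)] (g12))" by (rule base_le) (simp add: sems)
                also have "\<dots> \<le> ev vL (app [(False, g1)] (Join g3 g4))" by (rule app_mono[OF H17])
                also have "\<dots> \<le> ev vL (app [] (Meet g9 g11))" by (rule base_le) (simp add: sems)
                also have "\<dots> \<le> ev vL (app [] (g4))" by (rule app_mono[OF H27])
                also have "\<dots> \<le> ev vL (g4)" by (rule base_le) (simp add: sems)
                finally show ?thesis .
              qed
              then show False by (rule strict_1_4)
            qed
          next
            assume H28: "ev vL (Meet g2 g10) \<le> ev vL (g3)"
            have "ev vL (g2) \<le> ev vL (g5)"
            proof -
              have "ev vL (g2) \<le> ev vL (app [(False, g2)] (g8))" by (rule base_le) (simp add: sems)
              also have "\<dots> \<le> ev vL (app [(False, g2)] (Join g28 g29))" by (rule app_mono[OF H2])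
              also have "\<dots> \<le> ev vL (app [(True, g1), (False, g2)] (Meet g2 g10))" by (rule base_le) (simp add: sems)
              also have "\<dots> \<le> ev vL (app [(True, g1), (False, g2)] (g3))" by (rule app_mono[OF H28])
              also have "\<dots> \<le> ev vL (g5)" by (rule base_le) (simp add: sems)
              finally show ?thesis .
            qed
            then show False by (rule strict_2_5)
          next
            assume H29: "ev vL (Meet g2 g10) \<le> ev vL (g5)"
            have "ev vL (Meet g8 g13) \<le> ev vL (Join g4 g5)"
            proof -
              have "ev vL (Meet g8 g13) \<le> ev vL (app [(False, g13)] (g8))" by (rule base_le) (simp add: sems)
              also have "\<dots> \<le> ev vL (app [(False, g13)] (Join g28 g29))" by (rule app_mono[OF H2])
              also have "\<dots> \<le> ev vL (Join g4 g5)" by (rule base_le) (simp add: sems)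
              finally show ?thesis .
            qed
            from W_ev[OF this] show False
            proof (elim disjE)
              assume H30: "ev vL (g8) \<le> ev vL (Join g4 g5)"
              have "ev vL (g0) \<le> ev vL (g3)"
              proof -
                have "ev vL (g0) \<le> ev vL (app [(False, g0)] (g8))" by (rule base_le) (simp add: sems)
                also have "\<dots> \<le> ev vL (app [(False, g0)] (Join g4 g5))" by (rule app_mono[OF H30])
                also have "\<dots> \<le> ev vL (g3)" by (rule base_le) (simp add: sems)
                finally show ?thesis .
              qed
              then show False by (rule strict_0_3)
            next
              assume H31: "ev vL (g13) \<le> ev vL (Join g4 g5)"
              have "ev vL (g1) \<le> ev vL (g4)"
              proof -
                have "ev vL (g1) \<le> ev vL (app [(False, g1)] (g12))" by (rule base_le) (simp add: sems)
                also have "\<dots> \<le> ev vL (app [(False, g1)] (Join g3 g4))" by (rule app_mono[OF H17])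
                also have "\<dots> \<le> ev vL (app [(False, g9)] (g13))" by (rule base_le) (simp add: sems)
                also have "\<dots> \<le> ev vL (app [(False, g9)] (Join g4 g5))" by (rule app_mono[OF H31])
                also have "\<dots> \<le> ev vL (g4)" by (rule base_le) (simp add: sems)
                finally show ?thesis .
              qed
              then show False by (rule strict_1_4)
            next
              assume H32: "ev vL (Meet g8 g13) \<le> ev vL (g4)"
              have "ev vL (g2) \<le> ev vL (g5)"
              proof -
                have "ev vL (g2) \<le> ev vL (app [(False, g2)] (g8))" by (rule base_le) (simp add: sems)
                also have "\<dots> \<le> ev vL (app [(False, g2)] (Join g28 g29))" by (rule app_mono[OF H2])
                also have "\<dots> \<le> ev vL (app [(True, g27)] (Meet g2 g10))" by (rule base_le) (simp add: sems)
                also have "\<dots> \<le> ev vL (app [(True, g27)] (g5))" by (rule app_mono[OF H29])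
                also have "\<dots> \<le> ev vL (app [(False, g2)] (Meet g8 g13))" by (rule base_le) (simp add: sems)
                also have "\<dots> \<le> ev vL (app [(False, g2)] (g4))" by (rule app_mono[OF H32])
                also have "\<dots> \<le> ev vL (g5)" by (rule base_le) (simp add: sems)
                finally show ?thesis .
              qed
              then show False by (rule strict_2_5)
            next
              assume H33: "ev vL (Meet g8 g13) \<le> ev vL (g5)"
              have "ev vL (g2) \<le> ev vL (g5)"
              proof -
                have "ev vL (g2) \<le> ev vL (app [(False, g2)] (g8))" by (rule base_le) (simp add: sems)
                also have "\<dots> \<le> ev vL (app [(False, g2)] (Join g28 g29))" by (rule app_mono[OF H2])
                also have "\<dots> \<le> ev vL (app [(True, g27)] (Meet g2 g10))" by (rule base_le) (simp add: sems)
                also have "\<dots> \<le> ev vL (app [(True, g27)] (g5))" by (rule app_mono[OF H29])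
                also have "\<dots> \<le> ev vL (app [] (Meet g8 g13))" by (rule base_le) (simp add: sems)
                also have "\<dots> \<le> ev vL (app [] (g5))" by (rule app_mono[OF H33])
                also have "\<dots> \<le> ev vL (g5)" by (rule base_le) (simp add: sems)
                finally show ?thesis .
              qed
              then show False by (rule strict_2_5)
            qed
          qed
        next
          assume H34: "ev vL (Meet g0 g12) \<le> ev vL (g3)"
          have "ev vL (Meet g1 g9) \<le> ev vL (Join g3 g4)"
          proof -
            have "ev vL (Meet g1 g9) \<le> ev vL (app [(False, g30)] (g6))" by (rule base_le) (simp add: sems)
            also have "\<dots> \<le> ev vL (app [(False, g30)] (Join g23 g24))" by (rule app_mono[OF H1])
            also have "\<dots> \<le> ev vL (Join g3 g4)" by (rule base_le) (simp add: sems)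
            finally show ?thesis .
          qed
          from W_ev[OF this] show False
          proof (elim disjE)
            assume H35: "ev vL (g1) \<le> ev vL (Join g3 g4)"
            have "ev vL (Meet g9 g11) \<le> ev vL (Join g3 g4)"
            proof -
              have "ev vL (Meet g9 g11) \<le> ev vL (app [(False, g30)] (g6))" by (rule base_le) (simp add: sems)
              also have "\<dots> \<le> ev vL (app [(False, g30)] (Join g23 g24))" by (rule app_mono[OF H1])
              also have "\<dots> \<le> ev vL (Join g3 g4)" by (rule base_le) (simp add: sems)
              finally show ?thesis .
            qed
            from W_ev[OF this] show False
            proof (elim disjE)
              assume H36: "ev vL (g9) \<le> ev vL (Join g3 g4)"
              have "ev vL (g0) \<le> ev vL (g3)"
              proof -
                have "ev vL (g0) \<le> ev vL (app [(False, g0)] (g9))" by (rule base_le) (simp add: sems)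
                also have "\<dots> \<le> ev vL (app [(False, g0)] (Join g3 g4))" by (rule app_mono[OF H36])
                also have "\<dots> \<le> ev vL (app [] (Meet g0 g12))" by (rule base_le) (simp add: sems)
                also have "\<dots> \<le> ev vL (app [] (g3))" by (rule app_mono[OF H34])
                also have "\<dots> \<le> ev vL (g3)" by (rule base_le) (simp add: sems)
                finally show ?thesis .
              qed
              then show False by (rule strict_0_3)
            next
              assume H37: "ev vL (g11) \<le> ev vL (Join g3 g4)"
              have "ev vL (g0) \<le> ev vL (g3)"
              proof -
                have "ev vL (g0) \<le> ev vL (app [(False, g0)] (g6))" by (rule base_le) (simp add: sems)
                also have "\<dots> \<le> ev vL (app [(False, g0)] (Join g23 g24))" by (rule app_mono[OF H1])
                also have "\<dots> \<le> ev vL (app [(True, g2)] (Meet g0 g12))" by (rule base_le) (simp add: sems)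
                also have "\<dots> \<le> ev vL (app [(True, g2)] (g3))" by (rule app_mono[OF H34])
                also have "\<dots> \<le> ev vL (app [(False, g2), (True, g3)] (g11))" by (rule base_le) (simp add: sems)
                also have "\<dots> \<le> ev vL (app [(False, g2), (True, g3)] (Join g3 g4))" by (rule app_mono[OF H37])
                also have "\<dots> \<le> ev vL (g3)" by (rule base_le) (simp add: sems)
                finally show ?thesis .
              qed
              then show False by (rule strict_0_3)
            next
              assume H38: "ev vL (Meet g9 g11) \<le> ev vL (g3)"
              have "ev vL (g1) \<le> ev vL (g4)"
              proof -
                have "ev vL (g1) \<le> ev vL (app [(False, g1)] (g1))" by (rule base_le) (simp add: sems)
                also have "\<dots> \<le> ev vL (app [(False, g1)] (Join g3 g4))" by (rule app_mono[OF H35])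
                also have "\<dots> \<le> ev vL (app [(False, g1)] (Meet g9 g11))" by (rule base_le) (simp add: sems)
                also have "\<dots> \<le> ev vL (app [(False, g1)] (g3))" by (rule app_mono[OF H38])
                also have "\<dots> \<le> ev vL (g4)" by (rule base_le) (simp add: sems)
                finally show ?thesis .
              qed
              then show False by (rule strict_1_4)
            next
              assume H39: "ev vL (Meet g9 g11) \<le> ev vL (g4)"
              have "ev vL (g1) \<le> ev vL (g4)"
              proof -
                have "ev vL (g1) \<le> ev vL (app [(False, g1)] (g1))" by (rule base_le) (simp add: sems)
                also have "\<dots> \<le> ev vL (app [(False, g1)] (Join g3 g4))" by (rule app_mono[OF H35])
                also have "\<dots> \<le> ev vL (app [] (Meet g9 g11))" by (rule base_le) (simp add: sems)
                also have "\<dots> \<le> ev vL (app [] (g4))" by (rule app_mono[OF H39])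
                also have "\<dots> \<le> ev vL (g4)" by (rule base_le) (simp add: sems)
                finally show ?thesis .
              qed
              then show False by (rule strict_1_4)
            qed
          next
            assume H40: "ev vL (g9) \<le> ev vL (Join g3 g4)"
            have "ev vL (g0) \<le> ev vL (g3)"
            proof -
              have "ev vL (g0) \<le> ev vL (app [(False, g0)] (g9))" by (rule base_le) (simp add: sems)
              also have "\<dots> \<le> ev vL (app [(False, g0)] (Join g3 g4))" by (rule app_mono[OF H40])
              also have "\<dots> \<le> ev vL (app [] (Meet g0 g12))" by (rule base_le) (simp add: sems)
              also have "\<dots> \<le> ev vL (app [] (g3))" by (rule app_mono[OF H34])
              also have "\<dots> \<le> ev vL (g3)" by (rule base_le) (simp add: sems)
              finally show ?thesis .
            qed
            then show False by (rule strict_0_3)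
          next
            assume H41: "ev vL (Meet g1 g9) \<le> ev vL (g3)"
            have "ev vL (g1) \<le> ev vL (g4)"
            proof -
              have "ev vL (g1) \<le> ev vL (app [(False, g1)] (g6))" by (rule base_le) (simp add: sems)
              also have "\<dots> \<le> ev vL (app [(False, g1)] (Join g23 g24))" by (rule app_mono[OF H1])
              also have "\<dots> \<le> ev vL (app [(True, g2), (False, g1)] (Meet g1 g9))" by (rule base_le) (simp add: sems)
              also have "\<dots> \<le> ev vL (app [(True, g2), (False, g1)] (g3))" by (rule app_mono[OF H41])
              also have "\<dots> \<le> ev vL (g4)" by (rule base_le) (simp add: sems)
              finally show ?thesis .
            qed
            then show False by (rule strict_1_4)
          next
            assume H42: "ev vL (Meet g1 g9) \<le> ev vL (g4)"
            have "ev vL (Meet g9 g12) \<le> ev vL (Join g3 g4)"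
            proof -
              have "ev vL (Meet g9 g12) \<le> ev vL (app [(False, g32)] (g6))" by (rule base_le) (simp add: sems)
              also have "\<dots> \<le> ev vL (app [(False, g32)] (Join g23 g24))" by (rule app_mono[OF H1])
              also have "\<dots> \<le> ev vL (Join g3 g4)" by (rule base_le) (simp add: sems)
              finally show ?thesis .
            qed
            from W_ev[OF this] show False
            proof (elim disjE)
              assume H43: "ev vL (g9) \<le> ev vL (Join g3 g4)"
              have "ev vL (g0) \<le> ev vL (g3)"
              proof -
                have "ev vL (g0) \<le> ev vL (app [(False, g0)] (g9))" by (rule base_le) (simp add: sems)
                also have "\<dots> \<le> ev vL (app [(False, g0)] (Join g3 g4))" by (rule app_mono[OF H43])
                also have "\<dots> \<le> ev vL (app [] (Meet g0 g12))" by (rule base_le) (simp add: sems)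
                also have "\<dots> \<le> ev vL (app [] (g3))" by (rule app_mono[OF H34])
                also have "\<dots> \<le> ev vL (g3)" by (rule base_le) (simp add: sems)
                finally show ?thesis .
              qed
              then show False by (rule strict_0_3)
            next
              assume H44: "ev vL (g12) \<le> ev vL (Join g3 g4)"
              have "ev vL (g1) \<le> ev vL (g4)"
              proof -
                have "ev vL (g1) \<le> ev vL (app [(False, g1)] (g12))" by (rule base_le) (simp add: sems)
                also have "\<dots> \<le> ev vL (app [(False, g1)] (Join g3 g4))" by (rule app_mono[OF H44])
                also have "\<dots> \<le> ev vL (app [] (Meet g1 g9))" by (rule base_le) (simp add: sems)
                also have "\<dots> \<le> ev vL (app [] (g4))" by (rule app_mono[OF H42])
                also have "\<dots> \<le> ev vL (g4)" by (rule base_le) (simp add: sems)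
                finally show ?thesis .
              qed
              then show False by (rule strict_1_4)
            next
              assume H45: "ev vL (Meet g9 g12) \<le> ev vL (g3)"
              have "ev vL (g1) \<le> ev vL (g4)"
              proof -
                have "ev vL (g1) \<le> ev vL (app [(False, g1)] (g6))" by (rule base_le) (simp add: sems)
                also have "\<dots> \<le> ev vL (app [(False, g1)] (Join g23 g24))" by (rule app_mono[OF H1])
                also have "\<dots> \<le> ev vL (app [(True, g2), (False, g1)] (Meet g9 g12))" by (rule base_le) (simp add: sems)
                also have "\<dots> \<le> ev vL (app [(True, g2), (False, g1)] (g3))" by (rule app_mono[OF H45])
                also have "\<dots> \<le> ev vL (g4)" by (rule base_le) (simp add: sems)
                finally show ?thesis .
              qed
              then show False by (rule strict_1_4)
            next
              assume H46: "ev vL (Meet g9 g12) \<le> ev vL (g4)"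
              have "ev vL (g0) \<le> ev vL (g3)"
              proof -
                have "ev vL (g0) \<le> ev vL (app [(False, g0)] (g6))" by (rule base_le) (simp add: sems)
                also have "\<dots> \<le> ev vL (app [(False, g0)] (Join g23 g24))" by (rule app_mono[OF H1])
                also have "\<dots> \<le> ev vL (app [(True, g2), (False, g0)] (Meet g9 g12))" by (rule base_le) (simp add: sems)
                also have "\<dots> \<le> ev vL (app [(True, g2), (False, g0)] (g4))" by (rule app_mono[OF H46])
                also have "\<dots> \<le> ev vL (g3)" by (rule base_le) (simp add: sems)
                finally show ?thesis .
              qed
              then show False by (rule strict_0_3)
            qed
          qed
        next
          assume H47: "ev vL (Meet g0 g12) \<le> ev vL (g4)"
          have "ev vL (g0) \<le> ev vL (g3)"
          proof -
            have "ev vL (g0) \<le> ev vL (app [(False, g0)] (g6))" by (rule base_le) (simp add: sems)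
            also have "\<dots> \<le> ev vL (app [(False, g0)] (Join g23 g24))" by (rule app_mono[OF H1])
            also have "\<dots> \<le> ev vL (app [(True, g2), (False, g0)] (Meet g0 g12))" by (rule base_le) (simp add: sems)
            also have "\<dots> \<le> ev vL (app [(True, g2), (False, g0)] (g4))" by (rule app_mono[OF H47])
            also have "\<dots> \<le> ev vL (g3)" by (rule base_le) (simp add: sems)
            finally show ?thesis .
          qed
          then show False by (rule strict_0_3)
        qed
      next
        assume H48: "ev vL (g41) \<le> ev vL (Join g36 g37)"
        have "ev vL (g0) \<le> ev vL (g3)"
        proof -
          have "ev vL (g0) \<le> ev vL (app [(False, g0)] (g6))" by (rule base_le) (simp add: sems)
          also have "\<dots> \<le> ev vL (app [(False, g0)] (Join g23 g24))" by (rule app_mono[OF H1])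
          also have "\<dots> \<le> ev vL (app [(False, g0)] (g41))" by (rule base_le) (simp add: sems)
          also have "\<dots> \<le> ev vL (app [(False, g0)] (Join g36 g37))" by (rule app_mono[OF H48])
          also have "\<dots> \<le> ev vL (g3)" by (rule base_le) (simp add: sems)
          finally show ?thesis .
        qed
        then show False by (rule strict_0_3)
      next
        assume H49: "ev vL (Meet g11 g41) \<le> ev vL (g36)"
        have "ev vL (g2) \<le> ev vL (g5)"
        proof -
          have "ev vL (g2) \<le> ev vL (app [(False, g2)] (g8))" by (rule base_le) (simp add: sems)
          also have "\<dots> \<le> ev vL (app [(False, g2)] (Join g28 g29))" by (rule app_mono[OF H2])
          also have "\<dots> \<le> ev vL (app [(False, g2)] (Meet g11 g41))" by (rule base_le) (simp add: sems)
          also have "\<dots> \<le> ev vL (app [(False, g2)] (g36))" by (rule app_mono[OF H49])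
          also have "\<dots> \<le> ev vL (g5)" by (rule base_le) (simp add: sems)
          finally show ?thesis .
        qed
        then show False by (rule strict_2_5)
      next
        assume H50: "ev vL (Meet g11 g41) \<le> ev vL (g37)"
        have "ev vL (g1) \<le> ev vL (g4)"
        proof -
          have "ev vL (g1) \<le> ev vL (app [(False, g1)] (g6))" by (rule base_le) (simp add: sems)
          also have "\<dots> \<le> ev vL (app [(False, g1)] (Join g23 g24))" by (rule app_mono[OF H1])
          also have "\<dots> \<le> ev vL (app [(False, g1)] (Meet g11 g41))" by (rule base_le) (simp add: sems)
          also have "\<dots> \<le> ev vL (app [(False, g1)] (g37))" by (rule app_mono[OF H50])
          also have "\<dots> \<le> ev vL (g4)" by (rule base_le) (simp add: sems)
          finally show ?thesis .
        qed
        then show False by (rule strict_1_4)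
      qed
    next
      assume H51: "ev vL (g41) \<le> ev vL (Join g28 g29)"
      have "ev vL (g1) \<le> ev vL (g4)"
      proof -
        have "ev vL (g1) \<le> ev vL (app [(False, g1)] (g6))" by (rule base_le) (simp add: sems)
        also have "\<dots> \<le> ev vL (app [(False, g1)] (Join g23 g24))" by (rule app_mono[OF H1])
        also have "\<dots> \<le> ev vL (app [(False, g1)] (g41))" by (rule base_le) (simp add: sems)
        also have "\<dots> \<le> ev vL (app [(False, g1)] (Join g28 g29))" by (rule app_mono[OF H51])
        also have "\<dots> \<le> ev vL (g4)" by (rule base_le) (simp add: sems)
        finally show ?thesis .
      qed
      then show False by (rule strict_1_4)
    next
      assume H52: "ev vL (Meet g8 g41) \<le> ev vL (g28)"
      have "ev vL (g5) \<le> ev vL (g7)"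
      proof -
        have "ev vL (g5) \<le> ev vL (app [(False, g2)] (Meet g8 g41))" by (rule base_le) (simp add: sems)
        also have "\<dots> \<le> ev vL (app [(False, g2)] (g28))" by (rule app_mono[OF H52])
        also have "\<dots> \<le> ev vL (g7)" by (rule base_le) (simp add: sems)
        finally show ?thesis .
      qed
      then show False by (rule strict_5_7)
    next
      assume H53: "ev vL (Meet g8 g41) \<le> ev vL (g29)"
      have "ev vL (g0) \<le> ev vL (g3)"
      proof -
        have "ev vL (g0) \<le> ev vL (app [(False, g0)] (g6))" by (rule base_le) (simp add: sems)
        also have "\<dots> \<le> ev vL (app [(False, g0)] (Join g23 g24))" by (rule app_mono[OF H1])
        also have "\<dots> \<le> ev vL (app [(False, g0)] (Meet g8 g41))" by (rule base_le) (simp add: sems)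
        also have "\<dots> \<le> ev vL (app [(False, g0)] (g29))" by (rule app_mono[OF H53])
        also have "\<dots> \<le> ev vL (g3)" by (rule base_le) (simp add: sems)
        finally show ?thesis .
      qed
      then show False by (rule strict_0_3)
    qed
  next
    assume H54: "ev vL (g41) \<le> ev vL (Join g23 g24)"
    have "ev vL (g5) \<le> ev vL (g7)"
    proof -
      have "ev vL (g5) \<le> ev vL (app [(False, g2)] (g41))" by (rule base_le) (simp add: sems)
      also have "\<dots> \<le> ev vL (app [(False, g2)] (Join g23 g24))" by (rule app_mono[OF H54])
      also have "\<dots> \<le> ev vL (g7)" by (rule base_le) (simp add: sems)
      finally show ?thesis .
    qed
    then show False by (rule strict_5_7)
  next
    assume H55: "ev vL (Meet g6 g41) \<le> ev vL (g23)"
    have "ev vL (g4) \<le> ev vL (g7)"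
    proof -
      have "ev vL (g4) \<le> ev vL (app [(False, g1)] (Meet g6 g41))" by (rule base_le) (simp add: sems)
      also have "\<dots> \<le> ev vL (app [(False, g1)] (g23))" by (rule app_mono[OF H55])
      also have "\<dots> \<le> ev vL (g7)" by (rule base_le) (simp add: sems)
      finally show ?thesis .
    qed
    then show False by (rule strict_4_7)
  next
    assume H56: "ev vL (Meet g6 g41) \<le> ev vL (g24)"
    have "ev vL (g3) \<le> ev vL (g7)"
    proof -
      have "ev vL (g3) \<le> ev vL (app [(False, g0)] (Meet g6 g41))" by (rule base_le) (simp add: sems)
      also have "\<dots> \<le> ev vL (app [(False, g0)] (g24))" by (rule app_mono[OF H56])
      also have "\<dots> \<le> ev vL (g7)" by (rule base_le) (simp add: sems)
      finally show ?thesis .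
    qed
    then show False by (rule strict_3_7)
  qed
qed

end

lemma triple_facts:
  fixes x y z :: "'a::lattice"
  assumes var: "in_variety_N TYPE('a)" and m: "inf x y = inf x z" "inf x y = inf y z"
  shows "inf z (sup x y) = inf x y" and "inf (sup x y) (sup x z) = x"
proof -
  have zz: "inf x y \<le> z" using m(2) by (metis inf_le2)
  interpret six x y z "inf x y" "inf x y" "inf x y"
    by unfold_locales (fact var | fact m | (metis inf_le1 inf_le2 zz order_refl))+
  have "ev vL (Meet (Var 2) (Join (Var 0) (Var 1))) = ev vL (Meet (Var 0) (Var 1))"
    by (rule transfer) (simp add: sem6_Join sem6_Meet sem6_Var0 sem6_Var1 sem6_Var1S sem6_Var2)
  then show "inf z (sup x y) = inf x y" by (simp add: vL_def)
  have "ev vL (Meet (Join (Var 0) (Var 1)) (Join (Var 0) (Var 2))) = ev vL (Var 0)"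
    by (rule transfer) (simp add: sem6_Join sem6_Meet sem6_Var0 sem6_Var1 sem6_Var1S sem6_Var2)
  then show "inf (sup x y) (sup x z) = x" by (simp add: vL_def)
qed

lemma no4:
  fixes a b c e d :: "'a::lattice"
  assumes var: "in_variety_N TYPE('a)"
    and W: "\<And>s t u v :: 'a. inf s t \<le> sup u v \<Longrightarrow> s \<le> sup u v \<or> t \<le> sup u v \<or> inf s t \<le> u \<or> inf s t \<le> v"
    and m: "inf a b = d" "inf a c = d" "inf a e = d" "inf b c = d" "inf b e = d" "inf c e = d"
    and n: "\<not> a \<le> b" "\<not> b \<le> a" "\<not> c \<le> a" "\<not> e \<le> a"
  shows False
proof -
  have c1: "inf c (sup a b) = d" using triple_facts(1)[OF var, of a b c] m by simp
  have e1: "inf e (sup a b) = d" using triple_facts(1)[OF var, of a b e] m by simp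
  have q: "inf (sup (sup a b) c) (sup (sup a b) e) = sup a b"
    using triple_facts(2)[OF var, of "sup a b" c e] c1 e1 m by (simp add: inf_commute)
  then have "inf (sup (sup a b) c) (sup (sup a b) e) \<le> sup a b" by simp
  from W[OF this] show False
  proof (elim disjE)
    assume "sup (sup a b) c \<le> sup a b"
    then have "c \<le> sup a b" by simp
    then have "c = d" using c1 by (simp add: inf.absorb1)
    then show False using n m by (metis inf_le1)
  next
    assume "sup (sup a b) e \<le> sup a b"
    then have "e \<le> sup a b" by simp
    then have "e = d" using e1 by (simp add: inf.absorb1)
    then show False using n m by (metis inf_le1)
  next
    assume "inf (sup (sup a b) c) (sup (sup a b) e) \<le> a"
    then show False using q n by simp
  next
    assume "inf (sup (sup a b) c) (sup (sup a b) e) \<le> b"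
    then show False using q n by simp
  qed
qed

lemma card_ge_obtain3:
  assumes "finite Z" "card Z \<ge> 3"
  obtains x y z where "x \<in> Z" "y \<in> Z" "z \<in> Z" "x \<noteq> y" "x \<noteq> z" "y \<noteq> z"
proof -
  obtain T where T: "T \<subseteq> Z" "card T = 3" using obtain_subset_with_card_n[OF assms(2)] by blast
  then obtain x y z where "T = {x,y,z}" "x \<noteq> y" "x \<noteq> z" "y \<noteq> z"
    by (auto simp: card_Suc_eq numeral_3_eq_3)
  then show ?thesis using that T by auto
qed

lemma meet_part:
  fixes Y :: "'a::lattice set" and d :: 'a
  assumes var: "in_variety_N TYPE('a)"
    and W: "\<And>s t u v :: 'a. inf s t \<le> sup u v \<Longrightarrow> s \<le> sup u v \<or> t \<le> sup u v \<or> inf s t \<le> u \<or> inf s t \<le> v"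
    and anti: "antichain_in Y"
    and hd: "\<forall>a\<in>Y. \<forall>b\<in>Y. a \<noteq> b \<longrightarrow> inf a b = d"
  shows "finite Y \<and> card Y \<le> 3 \<and> card {a\<in>Y. \<not> covers d a} \<le> 2"
proof -
  have nle: "\<not> x \<le> y" if "x \<in> Y" "y \<in> Y" "x \<noteq> y" for x y
    using anti that unfolding antichain_in_def by blast
  have fin: "finite Y \<and> card Y \<le> 3"
  proof (rule ccontr)
    assume "\<not> (finite Y \<and> card Y \<le> 3)"
    then obtain T where T: "T \<subseteq> Y" "card T = 4"
    proof (cases "finite Y")
      case True
      then have "4 \<le> card Y" using \<open>\<not> (finite Y \<and> card Y \<le> 3)\<close> by simp
      then show ?thesis using obtain_subset_with_card_n that by blast
    next
      case False
      then show ?thesis using infinite_arbitrarily_large that by blast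
    qed
    then obtain a b c e where "T = {a,b,c,e}" "a \<noteq> b" "a \<noteq> c" "a \<noteq> e" "b \<noteq> c" "b \<noteq> e" "c \<noteq> e"
      by (auto simp: card_Suc_eq eval_nat_numeral)
    then have Y: "a \<in> Y" "b \<in> Y" "c \<in> Y" "e \<in> Y" and dd: "a \<noteq> b" "a \<noteq> c" "a \<noteq> e" "b \<noteq> c" "b \<noteq> e" "c \<noteq> e"
      using T by auto
    show False
      by (rule no4[OF var W, of a b d c e]) (use hd Y dd nle in auto)
  qed
  moreover have "card {a\<in>Y. \<not> covers d a} \<le> 2"
  proof (rule ccontr)
    assume "\<not> ?thesis"
    then have ge: "card {a\<in>Y. \<not> covers d a} \<ge> 3" by simp
    have finZ: "finite {a\<in>Y. \<not> covers d a}" using fin by simp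
    obtain a b c where abc0: "a \<in> {a\<in>Y. \<not> covers d a}" "b \<in> {a\<in>Y. \<not> covers d a}" "c \<in> {a\<in>Y. \<not> covers d a}"
      and dd: "a \<noteq> b" "a \<noteq> c" "b \<noteq> c"
      by (rule card_ge_obtain3[OF finZ ge])
    then have abc: "a \<in> Y" "b \<in> Y" "c \<in> Y" "\<not> covers d a" "\<not> covers d b" "\<not> covers d c" by auto
    have m: "inf a b = d" "inf a c = d" "inf b c = d" using hd abc(1-3) dd by auto
    have m': "inf b a = d" "inf c a = d" using m by (simp_all add: inf_commute)
    have lt: "d < x" if "x \<in> Y" "y \<in> Y" "x \<noteq> y" "inf x y = d" for x y
    proof -
      have "d \<le> x" using that(4) by (metis inf_le1)
      moreover have "d \<noteq> x"
      proof
        assume "d = x"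
        then have "x \<le> y" using that(4) by (metis inf_le2)
        then show False using nle[OF that(1-3)] by simp
      qed
      ultimately show ?thesis by simp
    qed
    have "d < a" using lt[OF abc(1) abc(2) dd(1) m(1)] .
    then obtain a1 where a1: "d < a1" "a1 < a" using abc(4) unfolding covers_def by blast
    have "d < b" using lt[OF abc(2) abc(1) dd(1)[symmetric] m'(1)] .
    then obtain b1 where b1: "d < b1" "b1 < b" using abc(5) unfolding covers_def by blast
    have "d < c" using lt[OF abc(3) abc(1) dd(2)[symmetric] m'(2)] .
    then obtain c1 where c1: "d < c1" "c1 < c" using abc(6) unfolding covers_def by blast
    have F: "inf a b = inf a c" "inf a b = inf b c" "inf a b \<le> a1" "a1 \<le> a" "inf a b \<le> b1" "b1 \<le> b"
      "inf a b \<le> c1" "c1 \<le> c" "\<not> a \<le> a1" "\<not> b \<le> b1" "\<not> c \<le> c1"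
      "\<not> a1 \<le> inf a b" "\<not> b1 \<le> inf a b" "\<not> c1 \<le> inf a b"
      "\<not> a \<le> b" "\<not> b \<le> a" "\<not> a \<le> c" "\<not> c \<le> a" "\<not> b \<le> c" "\<not> c \<le> b"
      using m a1 b1 c1 nle abc dd by (simp_all add: less_le_not_le)
    interpret six_w a b c a1 b1 c1
      by unfold_locales (fact var W F)+
    show False by (rule covers_contra)
  qed
  ultimately show ?thesis by blast
qed


fun dt :: "'v lterm \<Rightarrow> 'v lterm" where
  "dt (Var x) = Var x"
| "dt (Join s t) = Meet (dt s) (dt t)"
| "dt (Meet s t) = Join (dt s) (dt t)"

lemma undual_eval: "undual (eval_lt sup inf (w :: nat \<Rightarrow> 'a::lattice dual) s) = eval_lt sup inf (undual \<circ> w) (dt s)"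
  by (induction s) auto

fun \<sigma>5 :: "n5 \<Rightarrow> n5" where
  "\<sigma>5 N0 = N1" | "\<sigma>5 N1 = N0" | "\<sigma>5 NX = NY" | "\<sigma>5 NY = NX" | "\<sigma>5 NZ = NZ"

lemma \<sigma>5_join: "\<sigma>5 (n5_join x y) = n5_meet (\<sigma>5 x) (\<sigma>5 y)" by (cases x; cases y; simp)
lemma \<sigma>5_meet: "\<sigma>5 (n5_meet x y) = n5_join (\<sigma>5 x) (\<sigma>5 y)" by (cases x; cases y; simp)
lemma \<sigma>5_inv: "\<sigma>5 (\<sigma>5 x) = x" by (cases x; simp)

lemma n5_eval_dt: "eval_lt n5_join n5_meet v (dt s) = \<sigma>5 (eval_lt n5_join n5_meet (\<sigma>5 \<circ> v) s)"
  by (induction s) (auto simp: \<sigma>5_join \<sigma>5_meet \<sigma>5_inv)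

lemma variety_dual:
  assumes "in_variety_N TYPE('a::lattice)"
  shows "in_variety_N TYPE('a dual)"
  unfolding in_variety_N_def
proof (intro allI impI)
  fix s t :: "nat lterm" and w :: "nat \<Rightarrow> 'a dual"
  assume N: "\<forall>v :: nat \<Rightarrow> n5. eval_lt n5_join n5_meet v s = eval_lt n5_join n5_meet v t"
  have "\<forall>v :: nat \<Rightarrow> n5. eval_lt n5_join n5_meet v (dt s) = eval_lt n5_join n5_meet v (dt t)"
    using N by (simp add: n5_eval_dt)
  then have "eval_lt sup inf (undual \<circ> w) (dt s) = eval_lt sup inf (undual \<circ> w) (dt t)"
    using assms unfolding in_variety_N_def by blast
  then have "undual (eval_lt sup inf w s) = undual (eval_lt sup inf w t)" by (simp add: undual_eval)
  then show "eval_lt sup inf w s = eval_lt sup inf w t" by (simp add: dual_eq_iff)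
qed

lemma W_dual:
  assumes W: "\<And>s t u v :: 'a::lattice. inf s t \<le> sup u v \<Longrightarrow> s \<le> sup u v \<or> t \<le> sup u v \<or> inf s t \<le> u \<or> inf s t \<le> v"
  shows "inf s t \<le> sup u v \<Longrightarrow> s \<le> sup u v \<or> t \<le> sup u v \<or> inf s t \<le> u \<or> inf s t \<le> (v :: 'a dual)"
proof -
  assume "inf s t \<le> sup u v"
  then have "inf (undual u) (undual v) \<le> sup (undual s) (undual t)" by (simp add: dual_less_eq_iff)
  from W[OF this] show ?thesis by (auto simp add: dual_less_eq_iff)
qed

lemma covers_dual: "covers (dual x) (dual y) \<longleftrightarrow> covers (y::'a::order) x"
  unfolding covers_def
proof safe
  fix c assume "y < c" "c < x" "\<not> (\<exists>c. dual x < c \<and> c < dual y)"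
  then show False by (metis less_dual_iff)
next
  fix c assume "dual x < c" "c < dual y" "\<not> (\<exists>c. y < c \<and> c < x)"
  then show False by (metis dual_undual less_dual_iff)
qed

theorem theorem4p1:
  fixes Y :: "'a::lattice set" and f :: "'a \<Rightarrow> 'v lterm"
  assumes "in_variety_N TYPE('a)"
    and "fl_embedding f"
    and "antichain_in Y"
  shows "(\<forall>d. (\<forall>a\<in>Y. \<forall>b\<in>Y. a \<noteq> b \<longrightarrow> inf a b = d) \<longrightarrow>
            finite Y \<and> card Y \<le> 3 \<and> card {a\<in>Y. \<not> covers d a} \<le> 2)
       \<and> (\<forall>d. (\<forall>a\<in>Y. \<forall>b\<in>Y. a \<noteq> b \<longrightarrow> sup a b = d) \<longrightarrow>
            finite Y \<and> card Y \<le> 3 \<and> card {a\<in>Y. \<not> covers a d} \<le> 2)"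
proof -
  have W: "\<And>s t u v :: 'a. inf s t \<le> sup u v \<Longrightarrow> s \<le> sup u v \<or> t \<le> sup u v \<or> inf s t \<le> u \<or> inf s t \<le> v"
    using emb_W[OF assms(2)] by blast
  have P1: "\<forall>d. (\<forall>a\<in>Y. \<forall>b\<in>Y. a \<noteq> b \<longrightarrow> inf a b = d) \<longrightarrow>
            finite Y \<and> card Y \<le> 3 \<and> card {a\<in>Y. \<not> covers d a} \<le> 2"
    using meet_part[OF assms(1) W assms(3)] by blast
  have P2: "\<forall>d. (\<forall>a\<in>Y. \<forall>b\<in>Y. a \<noteq> b \<longrightarrow> sup a b = d) \<longrightarrow>
            finite Y \<and> card Y \<le> 3 \<and> card {a\<in>Y. \<not> covers a d} \<le> 2"
  proof (intro allI impI)
    fix d :: 'a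
    assume hd: "\<forall>a\<in>Y. \<forall>b\<in>Y. a \<noteq> b \<longrightarrow> sup a b = d"
    have anti': "antichain_in (dual ` Y)"
      using assms(3) unfolding antichain_in_def by auto
    have hd': "\<forall>a\<in>dual ` Y. \<forall>b\<in>dual ` Y. a \<noteq> b \<longrightarrow> inf a b = dual d"
      using hd by (auto simp flip: dual_sup_eq)
    have R: "finite (dual ` Y) \<and> card (dual ` Y) \<le> 3 \<and> card {x\<in>dual ` Y. \<not> covers (dual d) x} \<le> 2"
      by (rule meet_part[OF variety_dual[OF assms(1)] W_dual[OF W] anti' hd'])
    have inj: "inj_on dual A" for A :: "'a set" using inj_dual by (rule inj_on_subset) simp
    have eqS: "{x\<in>dual ` Y. \<not> covers (dual d) x} = dual ` {a\<in>Y. \<not> covers a d}"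
      by (auto simp: covers_dual)
    show "finite Y \<and> card Y \<le> 3 \<and> card {a\<in>Y. \<not> covers a d} \<le> 2"
      using R unfolding eqS by (simp add: finite_image_iff[OF inj] card_image[OF inj])
  qed
  show ?thesis using P1 P2 by blast
qed


end
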